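(* Let $n=4k$ with $k\ge2$, and let $\tau$ be an integer with $1\le\tau\le k$. Let $u_1,\ldots,u_k\in\mathbb{F}_{2^{2k}}^*$ be such that $u_iu_j^{2^k}\in\mathbb{F}_{2^k}^*$ for all $1\le i<j\le k$. Let $F(X_1,\ldots,X_\tau)$ be a reduced polynomial in $\mathbb{F}_2[X_1,\ldots,X_\tau]$ of algebraic degree $d$, let $\omega$ be a generator of the cyclic group $U=\{x\in\mathbb{F}_{2^{2k}}: x^{2^k+1}=1\}$, and let $\{i_1,\ldots,i_\tau\}\subseteq\{1,\ldots,k\}$. Then $H(x)=\mathrm{Tr}^n_k(\omega x^{2^k+1})+F(\mathrm{Tr}^n_1(u_{i_1}x),\ldots,\mathrm{Tr}^n_1(u_{i_\tau}x))$ is a vectorial bent $(n,k)$-function. Furthermore, if $u_1,\ldots,u_k$ are linearly independent over $\mathbb{F}_2$ and $d\ge2$, then $H$ has algebraic degree $d$.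
   Context: $\mathrm{Tr}^m_1(x)=\sum_{i=0}^{m-1}x^{2^i}$, $\mathrm{Tr}^{4k}_k(x)=x+x^{2^k}+x^{2^{2k}}+x^{2^{3k}}$. An $(n,k)$-function $H$ is vectorial bent if $\mathrm{Tr}^k_1(\lambda H(x))$ is bent for every $\lambda\in\mathbb{F}_{2^k}^*$ (bent: $|\sum_x(-1)^{f(x)+\mathrm{Tr}^n_1(ax)}|=2^{n/2}$ for all $a$). A reduced polynomial is a multilinear polynomial over $\mathbb{F}_2$; its algebraic degree is the largest size of a monomial with nonzero coefficient. The algebraic degree of a vectorial function is the maximal algebraic degree of its coordinate Boolean functions. *)

theory Defs
  imports Complex_Main
begin

text \<open>The field F_{2^n} is modelled by a finite field type 'a with CARD('a) = 2^n;
  the subfield F_{2^m} is the set of fixed points of x \<mapsto> x^(2^m).\<close>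

definition subfield :: "nat \<Rightarrow> 'a::field set" where
  "subfield m = {x. x ^ (2 ^ m) = x}"

definition trace :: "nat \<Rightarrow> 'a::comm_ring_1 \<Rightarrow> 'a" where
  "trace m x = (\<Sum>i<m. x ^ (2 ^ i))"

definition trace4 :: "nat \<Rightarrow> 'a::comm_ring_1 \<Rightarrow> 'a" where
  "trace4 k x = x + x ^ (2 ^ k) + x ^ (2 ^ (2 * k)) + x ^ (2 ^ (3 * k))"

text \<open>(-1)^y for y in F_2 (embedded in 'a as 0/1).\<close>
definition chi :: "'a::zero \<Rightarrow> real" where
  "chi y = (if y = 0 then 1 else -1)"

definition is_bent :: "nat \<Rightarrow> ('a::{field,finite} \<Rightarrow> 'a) \<Rightarrow> bool" where
  "is_bent n f \<longleftrightarrow>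
     (\<forall>a::'a. \<bar>\<Sum>x\<in>UNIV. chi (f x + trace n (a * x))\<bar> = 2 powr (real n / 2))"

definition vectorial_bent :: "nat \<Rightarrow> nat \<Rightarrow> ('a::{field,finite} \<Rightarrow> 'a) \<Rightarrow> bool" where
  "vectorial_bent n k H \<longleftrightarrow>
     (\<forall>l. l \<in> subfield k \<and> l \<noteq> 0 \<longrightarrow> is_bent n (\<lambda>x. trace k (l * H x)))"

text \<open>Reduced (multilinear) polynomials over F_2 are represented by their set of
  monomials (each monomial = set of variable indices) having coefficient 1.\<close>
definition eval_rpoly :: "nat set set \<Rightarrow> (nat \<Rightarrow> 'a::comm_ring_1) \<Rightarrow> 'a" where
  "eval_rpoly S y = (\<Sum>M\<in>S. \<Prod>i\<in>M. y i)"

definition rdeg :: "nat set set \<Rightarrow> nat" where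
  "rdeg S = (if S = {} then 0 else Max (card ` S))"

definition lin_indep_F2 :: "(nat \<Rightarrow> 'a::comm_ring_1) \<Rightarrow> nat set \<Rightarrow> bool" where
  "lin_indep_F2 u I \<longleftrightarrow> (\<forall>A\<subseteq>I. (\<Sum>i\<in>A. u i) = 0 \<longrightarrow> A = {})"

definition F2_basis :: "nat \<Rightarrow> (nat \<Rightarrow> 'a::comm_ring_1) \<Rightarrow> 'a set \<Rightarrow> bool" where
  "F2_basis m b V \<longleftrightarrow> bij_betw (\<lambda>X. \<Sum>i\<in>X. b i) (Pow {..<m}) V"

text \<open>S is the algebraic normal form (reduced polynomial in x_0..x_{m-1}) of the
  Boolean function f w.r.t. the basis b; a point x in F_2^m is given by its support X.\<close>
definition anf_rep :: "nat \<Rightarrow> (nat \<Rightarrow> 'a::comm_ring_1) \<Rightarrow> ('a \<Rightarrow> 'a) \<Rightarrow> nat set set \<Rightarrow> bool" where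
  "anf_rep m b f S \<longleftrightarrow> S \<subseteq> Pow {..<m} \<and>
     (\<forall>X\<in>Pow {..<m}. f (\<Sum>i\<in>X. b i) = of_nat (card {M\<in>S. M \<subseteq> X}))"

definition bool_alg_degree :: "nat \<Rightarrow> ('a::{field,finite} \<Rightarrow> 'a) \<Rightarrow> nat" where
  "bool_alg_degree n f =
     (let b = (SOME b. F2_basis n b (UNIV::'a set)) in rdeg (THE S. anf_rep n b f S))"

definition coord :: "nat \<Rightarrow> (nat \<Rightarrow> 'a::comm_ring_1) \<Rightarrow> nat \<Rightarrow> 'a \<Rightarrow> 'a" where
  "coord k c j y = (if j \<in> (THE X. X \<subseteq> {..<k} \<and> (\<Sum>i\<in>X. c i) = y) then 1 else 0)"

definition vec_alg_degree :: "nat \<Rightarrow> nat \<Rightarrow> ('a::{field,finite} \<Rightarrow> 'a) \<Rightarrow> nat" where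
  "vec_alg_degree n k H =
     (let c = (SOME c. F2_basis k c (subfield k :: 'a set))
      in Max ((\<lambda>j. bool_alg_degree n (\<lambda>x. coord k c j (H x))) ` {..<k}))"

definition unit_circle :: "nat \<Rightarrow> 'a::field set" where
  "unit_circle k = {x \<in> subfield (2 * k). x ^ (2 ^ k + 1) = 1}"

end

theory Submission
  imports Defs "HOL-Number_Theory.Residues" "HOL-Computational_Algebra.Polynomial"
begin

lemma char2_of_card:
  assumes "card (UNIV::'a::{field,finite} set) = 2^n" "n > 0"
  shows "(1::'a) + 1 = 0"
proof -
  have pos: "CHAR('a) > 0" by (rule finite_imp_CHAR_pos) simp
  have pr: "prime CHAR('a)" by (rule prime_CHAR_semidom[OF pos])
  have "CHAR('a) dvd 2^n" using CHAR_dvd_CARD[where 'a='a] assms(1) by simp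
  hence "CHAR('a) dvd 2" using pr prime_dvd_power by blast
  hence "CHAR('a) = 2" using pr
    using dvd_imp_le[of "CHAR('a)" 2] prime_ge_2_nat[of "CHAR('a)"] by simp
  hence "of_nat 2 = (0::'a)" by (metis of_nat_CHAR)
  thus ?thesis by simp
qed

lemma fermat_field:
  fixes x :: "'a::{field,finite}"
  shows "x ^ card (UNIV::'a set) = x"
proof (cases "x = 0")
  case True
  have "card (UNIV::'a set) > 0" by (simp add: card_gt_0_iff)
  then show ?thesis using True by (simp add: zero_power)
next
  case False
  let ?A = "UNIV - {0::'a}"
  have bij: "bij_betw (\<lambda>y. x * y) ?A ?A"
    using False by (auto simp: bij_betw_def inj_on_def intro!: image_eqI[where x="y / x" for y])
  have "(\<Prod>y\<in>?A. x * y) = (\<Prod>y\<in>?A. y)"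
    using prod.reindex_bij_betw[OF bij, of id] by simp
  moreover have "(\<Prod>y\<in>?A. x * y) = x ^ card ?A * (\<Prod>y\<in>?A. y)"
    by (simp add: prod.distrib)
  moreover have "(\<Prod>y\<in>?A. y) \<noteq> 0" by simp
  ultimately have "x ^ card ?A = 1" by simp
  moreover have "card ?A + 1 = card (UNIV::'a set)"
    using card_Diff_singleton[of "0::'a" UNIV] card_gt_0_iff[of "UNIV::'a set"] by simp
  ultimately show ?thesis by (metis power_Suc2 Suc_eq_plus1 mult_1 mult.commute)
qed

lemma sum_blocks:
  fixes g :: "nat \<Rightarrow> 'b::comm_monoid_add"
  shows "(\<Sum>m<a*k. g m) = (\<Sum>j<a. \<Sum>i<k. g (j*k + i))"
proof -
  have "(\<Sum>m<a*k. g m) = (\<Sum>j<a. sum g {j*k..<j*k+k})"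
    using sum.nat_group[of g k a] by simp
  also have "\<dots> = (\<Sum>j<a. \<Sum>i<k. g (j*k + i))"
  proof (rule sum.cong[OF refl])
    fix j
    show "sum g {j*k..<j*k+k} = (\<Sum>i<k. g (j*k + i))"
      using sum.shift_bounds_nat_ivl[of g 0 "j*k" k] by (simp add: atLeast0LessThan add.commute)
  qed
  finally show ?thesis .
qed

definition bit :: "'a::{zero,one} \<Rightarrow> bool" where "bit y \<longleftrightarrow> y = 0 \<or> y = 1"

locale GF =
  fixes TY :: "'a::{field,finite} itself" and k :: nat
  assumes cardA: "card (UNIV::'a set) = 2^(4*k)" and k2: "2 \<le> k"
begin

abbreviation "q \<equiv> (2::nat)^k"
abbreviation "n \<equiv> 4*k"

lemma two0: "(1::'a) + 1 = 0"
  using char2_of_card[OF cardA] k2 by simp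

lemma two_is0[simp]: "(2::'a) = 0"
  using two0 by (metis one_add_one)

lemma dbl0[simp]: "(x::'a) + x = 0"
  using two0 by (metis distrib_left mult.right_neutral mult_zero_right)

lemma minus_eq_plus: "(x::'a) - y = x + y"
  by (metis add_diff_cancel_right' diff_add_cancel dbl0 add.assoc add_0_right)

lemma uminus_id[simp]: "- (x::'a) = x"
  by (metis minus_eq_plus diff_0 add_0_left)

lemma frob2: "((x::'a) + y)^2 = x^2 + y^2"
proof -
  have "(x+y)^2 = x^2 + y^2 + (x*y + x*y)" by (simp add: power2_eq_square algebra_simps)
  thus ?thesis by simp
qed

lemma frob: "((x::'a) + y)^(2^i) = x^(2^i) + y^(2^i)"
proof (induction i)
  case 0 then show ?case by simp
next
  case (Suc i)
  have "(x+y)^(2^Suc i) = ((x+y)^(2^i))^2" by (simp add: power_mult[symmetric] mult.commute)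
  also have "\<dots> = (x^(2^i))^2 + (y^(2^i))^2" using Suc frob2 by simp
  also have "\<dots> = x^(2^Suc i) + y^(2^Suc i)" by (simp add: power_mult[symmetric] mult.commute)
  finally show ?case .
qed

lemma frob_sum: "(\<Sum>j\<in>A. (f j::'a))^(2^i) = (\<Sum>j\<in>A. f j ^ (2^i))"
  by (induction A rule: infinite_finite_induct) (auto simp: frob)

lemma frob_minus: "((x::'a) - y)^(2^i) = x^(2^i) - y^(2^i)"
  by (simp add: minus_eq_plus frob)

lemma fermat: "(x::'a)^(2^n) = x"
  using fermat_field[of x] cardA by simp

lemma fermat': "(x::'a) \<noteq> 0 \<Longrightarrow> x^(2^n - 1) = 1"
proof -
  assume "x \<noteq> 0"
  have "x^(2^n - 1) * x = x" using fermat[of x]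
    by (metis One_nat_def Suc_pred pos2 power_Suc2 zero_less_power)
  thus ?thesis using \<open>x\<noteq>0\<close> by simp
qed

lemma pow_mod: "(x::'a)^(2^(i + n)) = x^(2^i)"
  by (metis fermat power_add power_mult mult.commute)

lemma bit_iff: "bit (y::'a) \<longleftrightarrow> y^2 = y"
proof
  assume "y^2 = y"
  hence "y * (y - 1) = 0" by (simp add: power2_eq_square algebra_simps)
  thus "bit y" by (auto simp: bit_def)
qed (auto simp: bit_def)

lemma bit_zero[simp]: "bit 0" and bit_one[simp]: "bit 1" by (auto simp: bit_def)

lemma bit_add: "bit (a::'a) \<Longrightarrow> bit b \<Longrightarrow> bit (a + b)"
  by (auto simp: bit_def two0)

lemma bit_mult: "bit (a::'a) \<Longrightarrow> bit b \<Longrightarrow> bit (a * b)"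
  by (auto simp: bit_def)

lemma bit_sum: "(\<And>j. j \<in> A \<Longrightarrow> bit (f j::'a)) \<Longrightarrow> bit (\<Sum>j\<in>A. f j)"
  by (induction A rule: infinite_finite_induct) (auto intro!: bit_add)

lemma bit_prod: "(\<And>j. j \<in> A \<Longrightarrow> bit (f j::'a)) \<Longrightarrow> bit (\<Prod>j\<in>A. f j)"
  by (induction A rule: infinite_finite_induct) (auto intro!: bit_mult)

lemma bit_pow: "bit (a::'a) \<Longrightarrow> a^(2^i) = a"
  by (auto simp: bit_def)

lemma trace_add: "trace m ((x::'a) + y) = trace m x + trace m y"
  by (simp add: trace_def frob sum.distrib)

lemma trace_zero[simp]: "trace m (0::'a) = 0"
  by (simp add: trace_def power_0_left)

lemma trace_sum: "trace m (\<Sum>j\<in>A. (f j::'a)) = (\<Sum>j\<in>A. trace m (f j))"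
  by (induction A rule: infinite_finite_induct) (auto simp: trace_add)

lemma trace_sq_fix:
  assumes "(y::'a)^(2^m) = y"
  shows "(trace m y)^2 = trace m y"
proof -
  have "(trace m y)^2 = (\<Sum>i<m. y^(2^Suc i))"
    using frob_sum[of "\<lambda>i. y^(2^i)" "{..<m}" 1]
    by (simp add: trace_def power_mult[symmetric] mult.commute)
  also have "\<dots> = (\<Sum>i<Suc m. y^(2^i)) - y"
    using sum.lessThan_Suc_shift[of "\<lambda>i. y^(2^i)" m] by simp
  also have "\<dots> = trace m y"
    using sum.lessThan_Suc[of "\<lambda>i. y^(2^i)" m] by (simp add: assms trace_def)
  finally show ?thesis .
qed

lemma bit_trace: "bit (trace n (y::'a))"
  using trace_sq_fix[of y n] fermat bit_iff by simp

lemma trace_sq: "trace m ((y::'a)^2) = (trace m y)^2"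
proof -
  have "(trace m y)^2 = (\<Sum>i<m. (y^(2^i))^(2^1))"
    using frob_sum[of "\<lambda>i. y^(2^i)" "{..<m}" 1] by (simp add: trace_def)
  also have "\<dots> = (\<Sum>i<m. (y^2)^(2^i))"
    by (simp add: power_mult[symmetric] mult.commute)
  finally show ?thesis by (simp add: trace_def)
qed

lemma trace_frob: "trace n ((y::'a)^(2^j)) = trace n y"
proof (induction j)
  case (Suc j)
  have "trace n (y^(2^Suc j)) = trace n ((y^(2^j))^2)"
    by (simp add: power_mult[symmetric] mult.commute)
  also have "\<dots> = (trace n (y^(2^j)))^2" by (rule trace_sq)
  also have "\<dots> = trace n (y^(2^j))" using bit_trace bit_iff by blast
  finally show ?case using Suc by simp
qed simp

end

lemma card_roots_le:
  fixes c :: "nat \<Rightarrow> 'a::field"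
  assumes "finite E" "D \<in> E" "c D \<noteq> 0" "\<forall>i\<in>E. i \<le> D"
  shows "card {x. (\<Sum>i\<in>E. c i * x^i) = 0} \<le> D"
proof -
  define p where "p = (\<Sum>i\<in>E. monom (c i) i)"
  have ev: "poly p x = (\<Sum>i\<in>E. c i * x^i)" for x by (simp add: p_def poly_sum poly_monom)
  have "coeff p D = (\<Sum>i\<in>E. if i = D then c i else 0)"
    by (simp add: p_def coeff_sum coeff_monom)
  also have "\<dots> = c D" using assms by simp
  finally have "p \<noteq> 0" using assms by auto
  moreover have "degree p \<le> D"
    unfolding p_def using assms by (intro degree_sum_le) (auto intro: order.trans[OF degree_monom_le])
  ultimately have "card {x. poly p x = 0} \<le> D" using card_poly_roots_bound[of p] by linarith
  thus ?thesis by (simp add: ev)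
qed

context GF begin

lemma trace_as_poly: "trace m (b * (x::'a)) = (\<Sum>e\<in>(\<lambda>i. (2::nat)^i) ` {..<m}. b^e * x^e)"
proof -
  have "inj_on (\<lambda>i. (2::nat)^i) {..<m}" by (auto simp: inj_on_def)
  thus ?thesis by (simp add: sum.reindex trace_def power_mult_distrib)
qed

lemma trace_roots_card:
  assumes "b \<noteq> (0::'a)" "m > 0"
  shows "card {x::'a. trace m (b * x) = 0} \<le> 2^(m-1)"
proof -
  have "m - 1 < m" using assms by simp
  hence "card {x::'a. (\<Sum>e\<in>(\<lambda>i. (2::nat)^i) ` {..<m}. b^e * x^e) = 0} \<le> 2^(m-1)"
    using assms by (intro card_roots_le) (auto intro: power_increasing)
  thus ?thesis by (simp add: trace_as_poly)
qed

lemma trace_exists_one: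
  assumes "b \<noteq> (0::'a)"
  shows "\<exists>x. trace n (b * x) = 1"
proof (rule ccontr)
  assume "\<not> ?thesis"
  hence "\<forall>x. trace n (b * x) = 0" using bit_trace by (auto simp: bit_def)
  hence "{x::'a. trace n (b * x) = 0} = UNIV" by auto
  moreover have "card {x::'a. trace n (b * x) = 0} \<le> 2^(n-1)"
    using trace_roots_card[OF assms] k2 by simp
  moreover have "(2::nat)^(n-1) < 2^n" using k2 by simp
  ultimately show False using cardA by (metis not_le)
qed

lemma chi_add: "bit (a::'a) \<Longrightarrow> bit b \<Longrightarrow> chi (a + b) = chi a * chi b"
  by (auto simp: bit_def chi_def two0)

lemma chi_sq[simp]: "chi (a::'a) * chi a = 1"
  by (simp add: chi_def)

lemma chi_zero[simp]: "chi (0::'a) = 1" by (simp add: chi_def)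

lemma chi_abs[simp]: "\<bar>chi (a::'a)\<bar> = 1"
  by (simp add: chi_def)

lemma balanced:
  assumes "b \<noteq> (0::'a)"
  shows "(\<Sum>x\<in>UNIV. chi (trace n (b * x))) = 0"
proof -
  obtain x1 where x1: "trace n (b * x1) = 1" using trace_exists_one[OF assms] by blast
  have bij: "bij_betw (\<lambda>x. x + x1) UNIV (UNIV::'a set)"
    by (auto simp: bij_betw_def inj_on_def intro!: image_eqI[where x="y - x1" for y])
  have "(\<Sum>x\<in>UNIV. chi (trace n (b * x))) = (\<Sum>x\<in>UNIV. chi (trace n (b * (x + x1))))"
    using sum.reindex_bij_betw[OF bij, of "\<lambda>x. chi (trace n (b * x))"] by simp
  also have "\<dots> = (\<Sum>x\<in>UNIV. - chi (trace n (b * x)))"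
    by (intro sum.cong refl) (simp add: distrib_left trace_add x1 chi_add bit_trace, simp add: chi_def)
  finally show ?thesis by (simp add: sum_negf)
qed

lemma walsh_sq:
  assumes bf: "\<And>x. bit (f x::'a)"
  shows "(\<Sum>x\<in>UNIV. chi (f x + trace n (a * x)))^2
       = (\<Sum>e\<in>UNIV. chi (trace n (a * e)) * (\<Sum>x\<in>UNIV. chi (f x) * chi (f (x + e))))"
proof -
  define g where "g x = chi (f x + trace n (a * x))" for x
  have "(\<Sum>x\<in>UNIV. g x)^2 = (\<Sum>x\<in>UNIV. \<Sum>y\<in>UNIV. g x * g y)"
    by (simp add: power2_eq_square sum_product)
  also have "\<dots> = (\<Sum>x\<in>UNIV. \<Sum>e\<in>UNIV. g x * g (x + e))"
  proof (rule sum.cong[OF refl])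
    fix x
    have bij: "bij_betw (\<lambda>e. x + e) UNIV (UNIV::'a set)"
      by (auto simp: bij_betw_def inj_on_def intro!: image_eqI[where x="y - x" for y])
    show "(\<Sum>y\<in>UNIV. g x * g y) = (\<Sum>e\<in>UNIV. g x * g (x + e))"
      using sum.reindex_bij_betw[OF bij, of "\<lambda>y. g x * g y"] by simp
  qed
  also have "\<dots> = (\<Sum>e\<in>UNIV. \<Sum>x\<in>UNIV. g x * g (x + e))" by (rule sum.swap)
  also have "\<dots> = (\<Sum>e\<in>UNIV. chi (trace n (a * e)) * (\<Sum>x\<in>UNIV. chi (f x) * chi (f (x + e))))"
  proof (intro sum.cong refl)
    fix e
    have "g x * g (x + e) = chi (trace n (a * e)) * (chi (f x) * chi (f (x + e)))" for x
    proof -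
      have "g x * g (x + e) = (chi (f x) * chi (trace n (a * x))) *
              (chi (f (x+e)) * (chi (trace n (a * x)) * chi (trace n (a * e))))"
        unfolding g_def by (simp add: chi_add bf bit_trace distrib_left trace_add bit_add)
      also have "\<dots> = chi (trace n (a * e)) * (chi (f x) * chi (f (x + e))) *
                       (chi (trace n (a * x)) * chi (trace n (a * x)))"
        by (simp only: ac_simps)
      finally show ?thesis by simp
    qed
    thus "(\<Sum>x\<in>UNIV. g x * g (x + e)) = chi (trace n (a * e)) * (\<Sum>x\<in>UNIV. chi (f x) * chi (f (x + e)))"
      by (simp add: sum_distrib_left)
  qed
  finally show ?thesis by (simp add: g_def)
qed

lemma bent_from_deriv:
  assumes bf: "\<And>x. bit (f x::'a)"
    and der: "\<And>e. e \<noteq> 0 \<Longrightarrow> (\<Sum>x\<in>UNIV. chi (f x) * chi (f (x + e))) = 0"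
  shows "is_bent n f"
  unfolding is_bent_def
proof
  fix a :: 'a
  let ?W = "\<Sum>x\<in>UNIV. chi (f x + trace n (a * x))"
  have "?W^2 = (\<Sum>e\<in>UNIV. chi (trace n (a * e)) * (\<Sum>x\<in>UNIV. chi (f x) * chi (f (x + e))))"
    by (rule walsh_sq[OF bf])
  also have "\<dots> = (\<Sum>e\<in>{0}. chi (trace n (a * e)) * (\<Sum>x\<in>UNIV. chi (f x) * chi (f (x + e))))"
    by (intro sum.mono_neutral_right) (auto simp: der)
  also have "\<dots> = (\<Sum>x\<in>(UNIV::'a set). 1)" by (simp add: chi_zero)
  also have "\<dots> = 2^n" by (simp add: cardA)
  finally have W2: "?W^2 = 2^n" .
  have "\<bar>?W\<bar> = sqrt (?W^2)" by simp
  also have "\<dots> = sqrt (2^n)" using W2 by simp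
  also have "\<dots> = 2 powr (real n / 2)"
  proof -
    have "sqrt (2^n) = sqrt ((2 powr (real n / 2))^2)"
      by (simp add: powr_realpow[symmetric] powr_powr[symmetric] power2_eq_square powr_add[symmetric])
    thus ?thesis by simp
  qed
  finally show "\<bar>?W\<bar> = 2 powr (real n / 2)" .
qed

end

context GF begin

lemma fermat_q: "(x::'a)^(q^4) = x"
  using fermat[of x] by (simp add: power_mult[symmetric] mult.commute)

lemma pow2_pow2: "((y::'a)^(2^a))^(2^b) = y^(2^(a+b))"
  by (simp add: power_mult[symmetric] power_add)

lemma sub_pow: "(x::'a) \<in> subfield m \<Longrightarrow> x^(2^(m*j)) = x"
proof (induction j)
  case (Suc j)
  have "x^(2^(m*Suc j)) = (x^(2^m))^(2^(m*j))"
    by (simp add: power_mult[symmetric] power_add mult.commute)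
  thus ?case using Suc by (simp add: subfield_def)
qed simp

lemma sub_add: "x \<in> subfield m \<Longrightarrow> y \<in> subfield m \<Longrightarrow> (x::'a) + y \<in> subfield m"
  by (simp add: subfield_def frob)
lemma sub_mult: "x \<in> subfield m \<Longrightarrow> y \<in> subfield m \<Longrightarrow> (x::'a) * y \<in> subfield m"
  by (simp add: subfield_def power_mult_distrib)
lemma sub_div: "x \<in> subfield m \<Longrightarrow> y \<in> subfield m \<Longrightarrow> (x::'a) / y \<in> subfield m"
  unfolding subfield_def mem_Collect_eq by (simp only: power_divide)
lemma sub_pow_closed: "x \<in> subfield m \<Longrightarrow> (x::'a)^j \<in> subfield m"
proof -
  assume "x \<in> subfield m"
  have "(x^j)^(2^m) = (x^(2^m))^j" by (simp only: power_mult[symmetric] mult.commute)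
  thus ?thesis using \<open>x \<in> subfield m\<close> by (simp add: subfield_def)
qed
lemma sub_0[simp]: "(0::'a) \<in> subfield m" by (simp add: subfield_def power_0_left)
lemma sub_1[simp]: "(1::'a) \<in> subfield m" by (simp add: subfield_def)

lemma sub_mono: "x \<in> subfield m \<Longrightarrow> (x::'a) \<in> subfield (m * j)"
  using sub_pow[of x m j] by (simp add: subfield_def)

lemma sub_k_2k: "x \<in> subfield k \<Longrightarrow> (x::'a) \<in> subfield (2*k)"
  using sub_mono[of x k 2] by (simp only: mult.commute)

lemma q_pow: "x \<in> subfield k \<Longrightarrow> (x::'a)^q = x" by (simp add: subfield_def)

lemma q2_pow: "x \<in> subfield (2*k) \<Longrightarrow> (x::'a)^(q^2) = x"
proof -
  have "(q^2::nat) = 2^(2*k)" by (simp add: power_mult[symmetric] mult.commute)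
  thus "x \<in> subfield (2*k) \<Longrightarrow> x^(q^2) = x" by (simp add: subfield_def)
qed

lemma trace_n_sub_k:
  assumes "y \<in> subfield k"
  shows "trace n (y::'a) = 0"
proof -
  have "trace n y = (\<Sum>j<4. \<Sum>i<k. y^(2^(j*k+i)))"
    unfolding trace_def using sum_blocks[of "\<lambda>m. y^(2^m)" 4 k] by simp
  also have "\<dots> = (\<Sum>j<4::nat. trace k y)"
  proof (intro sum.cong refl)
    fix j :: nat
    have "y^(2^(j*k+i)) = y^(2^i)" for i
    proof -
      have "y^(2^(j*k+i)) = (y^(2^(k*j)))^(2^i)" by (simp only: pow2_pow2 ac_simps)
      thus ?thesis using sub_pow[OF assms, of j] by simp
    qed
    thus "(\<Sum>i<k. y^(2^(j*k+i))) = trace k y" by (simp add: trace_def)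
  qed
  also have "\<dots> = 0" by (simp add: eval_nat_numeral)
  finally show ?thesis .
qed

lemma trace4_sum: "trace4 k (y::'a) = (\<Sum>j<4. y^(2^(j*k)))"
  by (simp add: trace4_def eval_nat_numeral algebra_simps)

lemma trace4_sub: "trace4 k (y::'a) \<in> subfield k"
proof -
  have "(trace4 k y)^(2^k) = y^(2^k) + (y^(2^k))^(2^k) + (y^(2^(2*k)))^(2^k) + (y^(2^(3*k)))^(2^k)"
    by (simp add: trace4_def frob)
  also have "\<dots> = y^(2^k) + y^(2^(k+k)) + y^(2^(2*k+k)) + y^(2^(3*k+k))"
    by (simp only: pow2_pow2)
  also have "\<dots> = y^(2^k) + y^(2^(2*k)) + y^(2^(3*k)) + y^(2^(4*k))"
    by (simp add: mult_2 add.commute add.left_commute) (simp add: algebra_simps eval_nat_numeral)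
  also have "\<dots> = trace4 k y" using fermat[of y] by (simp add: trace4_def ac_simps)
  finally show ?thesis by (simp add: subfield_def)
qed

lemma trace_k_trace4:
  assumes "l \<in> subfield k"
  shows "trace k (l * trace4 k (y::'a)) = trace n (l * y)"
proof -
  have "l * trace4 k y = (\<Sum>j<4. (l*y)^(2^(j*k)))"
    using sub_pow[OF assms] by (simp add: trace4_sum sum_distrib_left power_mult_distrib mult.commute)
  hence "trace k (l * trace4 k y) = (\<Sum>j<4. trace k ((l*y)^(2^(j*k))))"
    by (simp add: trace_sum)
  also have "\<dots> = (\<Sum>j<4. \<Sum>i<k. (l*y)^(2^(j*k+i)))"
    by (simp add: trace_def power_mult[symmetric] power_add)
  also have "\<dots> = trace n (l * y)"
    unfolding trace_def using sum_blocks[of "\<lambda>m. (l*y)^(2^m)" 4 k] by simp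
  finally show ?thesis .
qed

lemma bit_trace_k: "b \<in> subfield k \<Longrightarrow> bit (trace k (b::'a))"
  using trace_sq_fix[of b k] bit_iff by (simp add: subfield_def)

lemma trace_k_bit_mult: "bit g \<Longrightarrow> trace k (l * (g::'a)) = g * trace k l"
  by (auto simp: bit_def trace_def power_0_left)

end

lemma nat_id1: "(q::nat) \<ge> 2 \<Longrightarrow> (q-1)*(q^2+1) + 4 = (q+1)*((q-2)^2 + 2*(q-2) + 3)"
proof -
  assume "q \<ge> 2"
  then obtain r where "q = r + 2" by (metis add.commute le_Suc_ex)
  thus ?thesis by (simp add: power2_eq_square algebra_simps)
qed

lemma nat_id2: "(q::nat) \<ge> 1 \<Longrightarrow> q*(q^2+1) = (q^2+1) + (q-1)*(q^2+1)"
proof -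
  assume "q \<ge> 1"
  then obtain r where "q = r + 1" by (metis add.commute le_Suc_ex)
  thus ?thesis by (simp add: power2_eq_square algebra_simps)
qed

lemma nat_id3: "(q::nat) \<ge> 1 \<Longrightarrow> (q^2+1)*(q-1)*(q+1) = q^4 - 1"
proof -
  assume "q \<ge> 1"
  then obtain r where "q = r + 1" by (metis add.commute le_Suc_ex)
  thus ?thesis by (simp add: power2_eq_square algebra_simps eval_nat_numeral)
qed

lemma nat_id4: "(q::nat) \<ge> 1 \<Longrightarrow> (q^2+1)*(q-1)*q^2 = (q^2+1)*(q-1) + (q^4 - 1)*(q-1)"
proof -
  assume "q \<ge> 1"
  then obtain r where "q = r + 1" by (metis add.commute le_Suc_ex)
  thus ?thesis by (simp add: power2_eq_square algebra_simps eval_nat_numeral)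
qed

lemma nat_id5: "(q::nat) \<ge> 2 \<Longrightarrow> (q^2+1)*(q-1) < q^4 - 1"
proof -
  assume "q \<ge> 2"
  then obtain r where "q = r + 2" by (metis add.commute le_Suc_ex)
  thus ?thesis by (simp add: power2_eq_square algebra_simps eval_nat_numeral)
qed

context GF begin

definition Lm :: "'a \<Rightarrow> 'a \<Rightarrow> 'a" where
  "Lm \<mu> e = \<mu>^(2^(3*k)) * e^(2^(3*k)) + \<mu> * e^(2^k)"

lemma q2e: "(2::nat)^(2*k) = q^2" by (simp add: power_mult[symmetric] mult.commute)
lemma q3e: "(2::nat)^(3*k) = q^3" by (simp add: power_mult[symmetric] mult.commute)
lemma q4e: "(2::nat)^(4*k) = q^4" by (simp add: power_mult[symmetric] mult.commute)
lemma q_ge4: "q \<ge> 4"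
proof -
  have "(2::nat)^2 \<le> 2^k" using k2 by (intro power_increasing) auto
  thus ?thesis by simp
qed

lemma quad_deriv:
  "trace n (\<mu> * (x+e)^(q+1)) + trace n (\<mu> * (x::'a)^(q+1))
     = trace n (Lm \<mu> e * x) + trace n (\<mu> * e^(q+1))"
proof -
  have "\<mu> * (x+e)^(q+1) = \<mu> * x^(q+1) + \<mu> * x^q * e + \<mu> * e^q * x + \<mu> * e^(q+1)"
    by (simp add: power_Suc2 frob algebra_simps del: power_Suc)
  hence "trace n (\<mu> * (x+e)^(q+1)) + trace n (\<mu> * x^(q+1))
       = trace n (\<mu> * x^q * e) + trace n (\<mu> * e^q * x) + trace n (\<mu> * e^(q+1))"
    by (simp add: trace_add algebra_simps)
  moreover have "trace n (\<mu> * x^q * e) = trace n (\<mu>^(2^(3*k)) * e^(2^(3*k)) * x)"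
  proof -
    have "trace n (\<mu> * x^q * e) = trace n ((\<mu> * x^q * e)^(2^(3*k)))" by (simp add: trace_frob)
    also have "(\<mu> * x^q * e)^(2^(3*k)) = \<mu>^(2^(3*k)) * e^(2^(3*k)) * (x^(2^k))^(2^(3*k))"
      by (simp add: power_mult_distrib)
    also have "(x^(2^k))^(2^(3*k)) = x" using pow2_pow2[of x k "3*k"] fermat[of x] by simp
    finally show ?thesis by simp
  qed
  ultimately show ?thesis by (simp add: Lm_def distrib_right trace_add algebra_simps)
qed

lemma Lm_add: "Lm \<mu> (a + b) = Lm \<mu> a + Lm \<mu> (b::'a)"
  by (simp add: Lm_def frob algebra_simps)

lemma Lm_pow: "(Lm \<mu> (e::'a))^q = \<mu> * e + \<mu>^q * e^(q^2)"
proof -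
  have "(Lm \<mu> e)^q = (\<mu>^(2^(3*k)))^(2^k) * (e^(2^(3*k)))^(2^k) + \<mu>^(2^k) * (e^(2^k))^(2^k)"
    by (simp add: Lm_def frob power_mult_distrib)
  also have "\<dots> = \<mu>^(2^(3*k+k)) * e^(2^(3*k+k)) + \<mu>^(2^k) * e^(2^(k+k))"
    by (simp only: pow2_pow2)
  also have "3*k+k = n" by simp
  also have "k + k = 2*k" by simp
  finally show ?thesis using fermat[of \<mu>] fermat[of e] by (simp add: q2e)
qed

lemma L_inj:
  assumes mu0: "\<mu> \<noteq> 0" and muc: "\<mu>^((q-1)*(q^2+1)) \<noteq> (1::'a)" and L0: "Lm \<mu> e = 0"
  shows "e = 0"
proof (rule ccontr)
  assume e0: "e \<noteq> 0"
  have "\<mu> * e + \<mu>^q * e^(q^2) = 0" using Lm_pow[of \<mu> e] L0 by (simp add: power_0_left)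
  hence eq: "\<mu> * e = \<mu>^q * e^(q^2)" by (metis add_diff_cancel_right' minus_eq_plus add_0_left)
  have A: "(\<mu> * e)^(q^2+1) = (\<mu>^q * e^(q^2))^(q^2+1)" using eq by (rule arg_cong)
  have "\<mu>^(q^2+1) * e^(q^2+1) = \<mu>^(q*(q^2+1)) * e^(q^2*(q^2+1))"
    using A by (simp only: power_mult_distrib power_mult)
  also have "e^(q^2*(q^2+1)) = e^(q^2+1)"
  proof -
    have "e^(q^2*(q^2+1)) = e^(q^4) * e^(q^2)" by (simp add: power_add[symmetric] algebra_simps eval_nat_numeral)
    thus ?thesis using fermat_q[of e] by simp
  qed
  finally have "\<mu>^(q^2+1) = \<mu>^(q*(q^2+1))" using e0 by simp
  also have "\<dots> = \<mu>^(q^2+1) * \<mu>^((q-1)*(q^2+1))"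
    using nat_id2[of q] by (simp add: power_add)
  finally have "\<mu>^((q-1)*(q^2+1)) = 1" using mu0 by simp
  thus False using muc by simp
qed

lemma sub_q_minus1: "l \<in> subfield k \<Longrightarrow> l \<noteq> 0 \<Longrightarrow> (l::'a)^(q-1) = 1"
proof -
  assume "l \<in> subfield k" "l \<noteq> 0"
  hence "l^(q-1) * l = l" using q_pow[of l] by (metis One_nat_def Suc_pred pos2 power_Suc2 zero_less_power)
  thus ?thesis using \<open>l \<noteq> 0\<close> by simp
qed

lemma mu_cond:
  assumes l: "l \<in> subfield k" "l \<noteq> 0" and w: "\<omega>^(q+1) = 1" "\<omega> \<noteq> (1::'a)"
  shows "(l*\<omega>)^((q-1)*(q^2+1)) \<noteq> 1"
proof
  assume "(l*\<omega>)^((q-1)*(q^2+1)) = 1"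
  moreover have "l^((q-1)*(q^2+1)) = 1"
  proof -
    have "l^((q-1)*(q^2+1)) = (l^(q-1))^(q^2+1)" by (simp only: power_mult)
    thus ?thesis using sub_q_minus1[OF l] by simp
  qed
  ultimately have w1: "\<omega>^((q-1)*(q^2+1)) = 1" by (simp add: power_mult_distrib)
  have "\<omega>^4 = \<omega>^((q-1)*(q^2+1) + 4)" using w1 by (simp add: power_add)
  also have "\<dots> = 1"
  proof -
    have "(q-1)*(q^2+1) + 4 = (q+1)*((q-2)^2 + 2*(q-2) + 3)" using nat_id1[of q] q_ge4 by simp
    thus ?thesis by (simp only: power_mult w(1) power_one)
  qed
  finally have w4: "\<omega>^4 = 1" .
  obtain s where s: "q = 4 * s" using k2
    by (metis dvd_def le_Suc_ex numeral_Bit0 power_add power_one_right mult_2 numeral_2_eq_2 power2_eq_square)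
  have "\<omega> = \<omega>^(q+1)"
  proof -
    have "\<omega>^(q+1) = (\<omega>^4)^s * \<omega>" by (simp only: s power_mult power_add power_one_right)
    thus ?thesis using w4 by simp
  qed
  with w show False by metis
qed

lemma omega_q:
  assumes "\<omega>^(q+1) = 1" "\<omega> \<noteq> (1::'a)"
  shows "\<omega>^q \<noteq> \<omega>"
proof
  assume "\<omega>^q = \<omega>"
  hence "\<omega>^2 = 1" using assms(1) by (simp add: power2_eq_square)
  hence "(\<omega> + 1)^2 = 0" using frob2[of \<omega> 1] by simp
  hence "\<omega> + 1 = 0" by simp
  hence "\<omega> = 1" by (metis add_diff_cancel_right' minus_eq_plus add_0_left)
  thus False using assms by simp
qed

end

context GF begin

lemma add_eq0_iff: "(a::'a) + b = 0 \<longleftrightarrow> a = b"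
  by (metis add_diff_cancel_right' minus_eq_plus add_0_left dbl0)

lemma pow3k_F2: "x \<in> subfield (2*k) \<Longrightarrow> (x::'a)^(2^(3*k)) = x^(2^k)"
proof -
  assume x: "x \<in> subfield (2*k)"
  have "x^(2^(3*k)) = (x^(2^(2*k)))^(2^k)" by (simp only: pow2_pow2) (simp add: algebra_simps)
  thus ?thesis using x by (simp add: subfield_def)
qed

lemma L_preimage:
  assumes l: "l \<in> subfield k" "l \<noteq> 0"
    and w: "\<omega> \<in> subfield (2*k)" "\<omega>^(q+1) = 1" "\<omega> \<noteq> (1::'a)"
    and u: "u \<in> subfield (2*k)" and t: "t \<in> subfield k"
    and L: "Lm (l*\<omega>) e = u*t" and s: "s \<in> subfield k"
  shows "trace n (u*s*e) = 0"
proof -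
  have wq: "\<omega>^q \<noteq> \<omega>" using omega_q w by blast
  define c0 where "c0 = l * (\<omega> + \<omega>^q)"
  have wsum: "\<omega> + \<omega>^q \<noteq> 0"
  proof
    assume "\<omega> + \<omega>^q = 0"
    hence "\<omega> = \<omega>^q" by (metis add_diff_cancel_right' minus_eq_plus add_0_left)
    thus False using wq by simp
  qed
  have c0nz: "c0 \<noteq> 0" using l wsum by (simp add: c0_def)
  have wqq: "(\<omega>^q)^q = \<omega>" using q2_pow[OF w(1)] by (simp add: power_mult[symmetric] power2_eq_square)
  have "(\<omega> + \<omega>^q)^q = \<omega> + \<omega>^q" using frob[of \<omega> "\<omega>^q" k] wqq by (simp add: add.commute)
  hence ws: "\<omega> + \<omega>^q \<in> subfield k" by (simp add: subfield_def)
  have c0k: "c0 \<in> subfield k" unfolding c0_def using sub_mult[OF l(1) ws] .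
  have t2: "t \<in> subfield (2*k)" using t by (rule sub_k_2k)
  have ut2: "u * t \<in> subfield (2*k)" using u t2 by (rule sub_mult)
  define e' where "e' = (u*t)^q / c0"
  have e'2: "e' \<in> subfield (2*k)" unfolding e'_def
    using sub_div[OF sub_pow_closed[OF ut2] sub_k_2k[OF c0k]] by simp
  have e'q: "e'^q = u*t / c0"
  proof -
    have "e'^q = ((u*t)^q)^q / c0^q" by (simp add: e'_def power_divide)
    also have "((u*t)^q)^q = u*t" using q2_pow[OF ut2] by (simp add: power_mult[symmetric] power2_eq_square)
    also have "c0^q = c0" using c0k by (simp add: subfield_def)
    finally show ?thesis .
  qed
  have mu3: "(l*\<omega>)^(2^(3*k)) = l * \<omega>^q"
    using pow3k_F2[OF sub_k_2k[OF l(1)]] pow3k_F2[OF w(1)] q_pow[OF l(1)]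
    by (simp add: power_mult_distrib)
  have "Lm (l*\<omega>) e' = l * \<omega>^q * e'^q + l * \<omega> * e'^q"
    unfolding Lm_def using mu3 pow3k_F2[OF e'2] by simp
  also have "\<dots> = c0 * e'^q" by (simp add: c0_def algebra_simps)
  also have "\<dots> = c0 * (u * t / c0)" by (simp add: e'q)
  also have "\<dots> = u * t" using c0nz by simp
  finally have Le': "Lm (l*\<omega>) e' = u*t" .
  have "Lm (l*\<omega>) (e + e') = 0" using L Le' by (simp add: Lm_add)
  moreover have "l*\<omega> \<noteq> 0" using l w by auto
  moreover have "(l*\<omega>)^((q-1)*(q^2+1)) \<noteq> 1" using mu_cond l w by blast
  ultimately have "e + e' = 0" using L_inj by blast
  hence ee: "e = e'" by (metis add_diff_cancel_right' minus_eq_plus add_0_left)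
  have uq: "u^(q+1) \<in> subfield k"
  proof -
    have "(u^(q+1))^q = (u^q)^q * u^q" by (simp add: power_mult_distrib power_add power_mult[symmetric] algebra_simps)
    also have "(u^q)^q = u" using q2_pow[OF u] by (simp add: power_mult[symmetric] power2_eq_square)
    finally show ?thesis by (simp add: subfield_def algebra_simps)
  qed
  have "u*s*e = u^(q+1) * s * t^q / c0" by (simp add: ee e'_def power_mult_distrib algebra_simps)
  moreover have "u^(q+1) * s * t^q / c0 \<in> subfield k"
    by (intro sub_div sub_mult uq s sub_pow_closed t c0k)
  ultimately show ?thesis using trace_n_sub_k by simp
qed

lemma U_nontriv: "\<exists>z. z \<in> unit_circle k \<and> z \<noteq> (1::'a)"
proof -
  define D where "D = (q^2+1)*(q-1)"
  have D0: "D \<noteq> 0" using q_ge4 by (simp add: D_def)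
  define c where "c = (\<lambda>i::nat. if i = 0 then (-1::'a) else 1)"
  have "card {x::'a. (\<Sum>i\<in>{0,D}. c i * x^i) = 0} \<le> D"
    by (rule card_roots_le) (auto simp: c_def D0)
  moreover have "{x::'a. (\<Sum>i\<in>{0,D}. c i * x^i) = 0} = {x::'a. x^D = 1}"
    using D0 by (auto simp: c_def add_eq0_iff)
  ultimately have cr: "card {x::'a. x^D = 1} \<le> D" by simp
  have "\<exists>x::'a. x \<noteq> 0 \<and> x^D \<noteq> 1"
  proof (rule ccontr)
    assume "\<not> ?thesis"
    hence "UNIV - {0} \<subseteq> {x::'a. x^D = 1}" by auto
    hence "card (UNIV - {0::'a}) \<le> card {x::'a. x^D = 1}" by (intro card_mono) auto
    moreover have "card (UNIV - {0::'a}) = q^4 - 1" using cardA q4e by (simp add: card_Diff_singleton)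
    moreover have "D < q^4 - 1" using nat_id5[of q] q_ge4 by (simp add: D_def)
    ultimately show False using cr by linarith
  qed
  then obtain x :: 'a where x: "x \<noteq> 0" "x^D \<noteq> 1" by blast
  have xo: "x^(q^4-1) = 1" using fermat'[OF x(1)] q4e by simp
  have "(x^D)^(q+1) = 1"
  proof -
    have "D*(q+1) = q^4-1" using nat_id3[of q] q_ge4 by (simp add: D_def)
    moreover have "(x^D)^(q+1) = x^(D*(q+1))" by (simp only: power_mult)
    ultimately have "(x^D)^(q+1) = x^(q^4-1)" by simp
    thus ?thesis using xo by simp
  qed
  moreover have "(x^D)^(2^(2*k)) = x^D"
  proof -
    have "(x^D)^(2^(2*k)) = (x^D)^(q^2)" by (simp only: q2e)
    also have "\<dots> = x^(D*q^2)" by (simp only: power_mult)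
    also have "D*q^2 = D + (q^4-1)*(q-1)" using nat_id4[of q] q_ge4 by (simp add: D_def)
    also have "x^(D + (q^4-1)*(q-1)) = x^D" using xo by (simp add: power_add power_mult)
    finally show ?thesis .
  qed
  ultimately have "x^D \<in> unit_circle k" by (simp add: unit_circle_def subfield_def)
  thus ?thesis using x by blast
qed

lemma omega_ne1:
  assumes "\<omega> \<in> unit_circle k" "unit_circle k \<subseteq> range (\<lambda>m::nat. \<omega> ^ m)"
  shows "\<omega> \<noteq> (1::'a)"
proof
  assume "\<omega> = 1"
  obtain z where "z \<in> unit_circle k" "z \<noteq> (1::'a)" using U_nontriv by blast
  thus False using assms \<open>\<omega> = 1\<close> by auto
qed

end

context GF begin

definition subgrp :: "'a set \<Rightarrow> bool" where
  "subgrp U0 \<longleftrightarrow> 0 \<in> U0 \<and> (\<forall>a\<in>U0. \<forall>b\<in>U0. a + b \<in> U0)"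

definition span0 :: "'a set \<Rightarrow> ('a \<Rightarrow> real) \<Rightarrow> bool" where
  "span0 U0 h \<longleftrightarrow> (\<exists>c. (\<forall>t. t \<notin> U0 \<longrightarrow> c t = 0) \<and>
      (\<forall>x. h x = (\<Sum>t\<in>UNIV. c t * chi (trace n (t * x)))))"

lemma chi_tr_mult: "chi (trace n (t * x)) * chi (trace n (s * (x::'a))) = chi (trace n ((t + s) * x))"
  by (simp add: chi_add[symmetric] bit_trace distrib_right trace_add)

lemma sum_ifdelta: "(\<Sum>t\<in>UNIV. (if t = (v::'a) then a else 0) * g t) = (a::real) * g v"
proof -
  have "(\<Sum>t\<in>UNIV. (if t = v then a else 0) * g t) = (\<Sum>t\<in>UNIV. if t = v then a * g t else 0)"
    by (intro sum.cong) auto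
  also have "\<dots> = a * g v" by (simp add: sum.delta')
  finally show ?thesis .
qed

lemma span0_const: "subgrp U0 \<Longrightarrow> span0 U0 (\<lambda>x. a)"
  unfolding span0_def
  by (rule exI[of _ "\<lambda>t. if t = 0 then a else 0"]) (auto simp: subgrp_def sum_ifdelta)

lemma span0_gen: "v \<in> U0 \<Longrightarrow> span0 U0 (\<lambda>x. chi (trace n (v * x)))"
  unfolding span0_def
  by (rule exI[of _ "\<lambda>t. if t = v then 1 else 0"]) (auto simp: sum_ifdelta)

lemma span0_add: "span0 U0 h1 \<Longrightarrow> span0 U0 h2 \<Longrightarrow> span0 U0 (\<lambda>x. h1 x + h2 x)"
  unfolding span0_def
proof (elim exE conjE)
  fix c1 c2
  assume "\<forall>t. t \<notin> U0 \<longrightarrow> c1 t = 0" "\<forall>x. h1 x = (\<Sum>t\<in>UNIV. c1 t * chi (trace n (t * x)))"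
    "\<forall>t. t \<notin> U0 \<longrightarrow> c2 t = 0" "\<forall>x. h2 x = (\<Sum>t\<in>UNIV. c2 t * chi (trace n (t * x)))"
  thus "\<exists>c. (\<forall>t. t \<notin> U0 \<longrightarrow> c t = 0) \<and> (\<forall>x. h1 x + h2 x = (\<Sum>t\<in>UNIV. c t * chi (trace n (t * x))))"
    by (intro exI[of _ "\<lambda>t. c1 t + c2 t"]) (simp add: distrib_right sum.distrib)
qed

lemma span0_scale: "span0 U0 h \<Longrightarrow> span0 U0 (\<lambda>x. a * h x)"
  unfolding span0_def
proof (elim exE conjE)
  fix c
  assume "\<forall>t. t \<notin> U0 \<longrightarrow> c t = 0" "\<forall>x. h x = (\<Sum>t\<in>UNIV. c t * chi (trace n (t * x)))"
  thus "\<exists>c. (\<forall>t. t \<notin> U0 \<longrightarrow> c t = 0) \<and> (\<forall>x. a * h x = (\<Sum>t\<in>UNIV. c t * chi (trace n (t * x))))"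
    by (intro exI[of _ "\<lambda>t. a * c t"]) (simp add: sum_distrib_left mult.assoc)
qed

lemma span0_mult:
  assumes G: "subgrp U0" and h1: "span0 U0 h1" and h2: "span0 U0 h2"
  shows "span0 U0 (\<lambda>x. h1 x * h2 x)"
proof -
  obtain c1 where c1: "\<forall>t. t \<notin> U0 \<longrightarrow> c1 t = 0" "\<forall>x. h1 x = (\<Sum>t\<in>UNIV. c1 t * chi (trace n (t * x)))"
    using h1 unfolding span0_def by blast
  obtain c2 where c2: "\<forall>t. t \<notin> U0 \<longrightarrow> c2 t = 0" "\<forall>x. h2 x = (\<Sum>t\<in>UNIV. c2 t * chi (trace n (t * x)))"
    using h2 unfolding span0_def by blast
  define c where "c r = (\<Sum>t\<in>UNIV. c1 t * c2 (r + t))" for r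
  have supp: "c r = 0" if "r \<notin> U0" for r
    unfolding c_def
  proof (intro sum.neutral ballI)
    fix t
    show "c1 t * c2 (r + t) = 0"
    proof (cases "t \<in> U0")
      case True
      have "r + t \<notin> U0"
      proof
        assume "r + t \<in> U0"
        hence "(r + t) + t \<in> U0" using G True unfolding subgrp_def by blast
        moreover have "(r + t) + t = r" by (simp add: add.assoc)
        ultimately show False using that by simp
      qed
      thus ?thesis using c2 by simp
    qed (use c1 in simp)
  qed
  have "h1 x * h2 x = (\<Sum>r\<in>UNIV. c r * chi (trace n (r * x)))" for x
  proof -
    have "h1 x * h2 x = (\<Sum>t\<in>UNIV. \<Sum>s\<in>UNIV. c1 t * c2 s * (chi (trace n (t * x)) * chi (trace n (s * x))))"
      using c1 c2 by (simp add: sum_product ac_simps)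
    also have "\<dots> = (\<Sum>t\<in>UNIV. \<Sum>s\<in>UNIV. c1 t * c2 s * chi (trace n ((t + s) * x)))"
      by (simp only: chi_tr_mult)
    also have "\<dots> = (\<Sum>t\<in>UNIV. \<Sum>r\<in>UNIV. c1 t * c2 (r + t) * chi (trace n (r * x)))"
    proof (rule sum.cong[OF refl])
      fix t
      have bij: "bij_betw (\<lambda>r. r + t) UNIV (UNIV::'a set)"
        by (auto simp: bij_betw_def inj_on_def intro!: image_eqI[where x="y - t" for y])
      have "(\<Sum>s\<in>UNIV. c1 t * c2 s * chi (trace n ((t + s) * x)))
          = (\<Sum>r\<in>UNIV. c1 t * c2 (r + t) * chi (trace n ((t + (r + t)) * x)))"
        using sum.reindex_bij_betw[OF bij, of "\<lambda>s. c1 t * c2 s * chi (trace n ((t + s) * x))"] by simp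
      also have "\<dots> = (\<Sum>r\<in>UNIV. c1 t * c2 (r + t) * chi (trace n (r * x)))"
        by (simp add: add.left_commute[of t r t for r] add.assoc[symmetric])
      finally show "(\<Sum>s\<in>UNIV. c1 t * c2 s * chi (trace n ((t + s) * x)))
          = (\<Sum>r\<in>UNIV. c1 t * c2 (r + t) * chi (trace n (r * x)))" .
    qed
    also have "\<dots> = (\<Sum>r\<in>UNIV. \<Sum>t\<in>UNIV. c1 t * c2 (r + t) * chi (trace n (r * x)))"
      by (rule sum.swap)
    also have "\<dots> = (\<Sum>r\<in>UNIV. c r * chi (trace n (r * x)))"
      by (simp add: c_def sum_distrib_right)
    finally show ?thesis .
  qed
  thus ?thesis using supp unfolding span0_def by blast
qed

lemma span0_prod:
  assumes "subgrp U0" "\<And>i. i \<in> A \<Longrightarrow> span0 U0 (h i)"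
  shows "span0 U0 (\<lambda>x. \<Prod>i\<in>A. h i x)"
  using assms(2)
proof (induction A rule: infinite_finite_induct)
  case (infinite A) then show ?case using span0_const[OF assms(1)] by simp
next
  case empty then show ?case using span0_const[OF assms(1)] by simp
next
  case (insert a A)
  thus ?case using span0_mult[OF assms(1)] by simp
qed

lemma span0_orth:
  assumes G: "subgrp U0" and h: "span0 U0 h" and w: "w \<notin> U0"
  shows "(\<Sum>x\<in>UNIV. chi (trace n (w * x)) * h x) = 0"
proof -
  obtain c where c: "\<forall>t. t \<notin> U0 \<longrightarrow> c t = 0" "\<forall>x. h x = (\<Sum>t\<in>UNIV. c t * chi (trace n (t * x)))"
    using h unfolding span0_def by blast
  have "(\<Sum>x\<in>UNIV. chi (trace n (w * x)) * h x)
      = (\<Sum>x\<in>UNIV. \<Sum>t\<in>UNIV. c t * chi (trace n ((t + w) * x)))"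
  proof (intro sum.cong refl)
    fix x
    have "chi (trace n (w * x)) * h x = (\<Sum>t\<in>UNIV. c t * (chi (trace n (t * x)) * chi (trace n (w * x))))"
      using c(2) by (simp add: sum_distrib_left sum_distrib_right ac_simps)
    thus "chi (trace n (w * x)) * h x = (\<Sum>t\<in>UNIV. c t * chi (trace n ((t + w) * x)))"
      by (simp only: chi_tr_mult)
  qed
  also have "\<dots> = (\<Sum>t\<in>UNIV. c t * (\<Sum>x\<in>UNIV. chi (trace n ((t + w) * x))))"
    by (subst sum.swap) (simp add: sum_distrib_left)
  also have "\<dots> = 0"
  proof (intro sum.neutral ballI)
    fix t
    show "c t * (\<Sum>x\<in>UNIV. chi (trace n ((t + w) * x))) = 0"
    proof (cases "t \<in> U0")
      case True
      hence "t + w \<noteq> 0" using w add_eq0_iff by auto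
      thus ?thesis using balanced by simp
    qed (use c in simp)
  qed
  finally show ?thesis .
qed

lemma chi_sum_bits:
  "(\<And>M. M \<in> S \<Longrightarrow> bit (g M::'a)) \<Longrightarrow> chi (\<Sum>M\<in>S. g M) = (\<Prod>M\<in>S. chi (g M))"
proof (induction S rule: infinite_finite_induct)
  case (insert a A)
  thus ?case by (simp add: chi_add bit_sum)
qed auto

lemma chi_mult_bits: "bit (b::'a) \<Longrightarrow> bit B \<Longrightarrow> chi (b * B) = 1 - 2 * ((1 - chi b)/2) * ((1 - chi B)/2)"
  by (auto simp: bit_def chi_def)

lemma chi_prod_bits:
  "(\<And>j. j \<in> M \<Longrightarrow> bit (b j::'a)) \<Longrightarrow> chi (\<Prod>j\<in>M. b j) = 1 - 2 * (\<Prod>j\<in>M. (1 - chi (b j))/2)"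
proof (induction M rule: infinite_finite_induct)
  case (infinite A) then show ?case by (simp add: chi_def)
next
  case empty then show ?case by (simp add: chi_def)
next
  case (insert a A)
  have IH: "(1 - chi (\<Prod>j\<in>A. b j))/2 = (\<Prod>j\<in>A. (1 - chi (b j))/2)"
    using insert by simp
  have "chi (\<Prod>j\<in>insert a A. b j) = chi (b a * (\<Prod>j\<in>A. b j))" using insert by simp
  also have "\<dots> = 1 - 2 * ((1 - chi (b a))/2) * ((1 - chi (\<Prod>j\<in>A. b j))/2)"
    using insert by (intro chi_mult_bits) (auto intro: bit_prod)
  also have "\<dots> = 1 - 2 * (\<Prod>j\<in>insert a A. (1 - chi (b j))/2)"
    using insert IH by (simp add: mult.assoc)
  finally show ?case .
qed

lemma span0_chi_rpoly:
  assumes G: "subgrp U0" and bits: "\<And>j x. bit (l j x::'a)"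
    and sp: "\<And>M j. M \<in> S \<Longrightarrow> j \<in> M \<Longrightarrow> span0 U0 (\<lambda>x. chi (l j x))"
  shows "span0 U0 (\<lambda>x. chi (eval_rpoly S (\<lambda>j. l j x)))"
proof -
  have eq: "chi (eval_rpoly S (\<lambda>j. l j x)) = (\<Prod>M\<in>S. 1 - 2 * (\<Prod>j\<in>M. (1 - chi (l j x))/2))" for x
    unfolding eval_rpoly_def
    by (subst chi_sum_bits) (auto intro!: bit_prod bits prod.cong chi_prod_bits)
  have "span0 U0 (\<lambda>x. \<Prod>M\<in>S. 1 - 2 * (\<Prod>j\<in>M. (1 - chi (l j x))/2))"
  proof (intro span0_prod[OF G])
    fix M assume M: "M \<in> S"
    have "span0 U0 (\<lambda>x. \<Prod>j\<in>M. (1 - chi (l j x))/2)"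
    proof (intro span0_prod[OF G])
      fix j assume "j \<in> M"
      hence "span0 U0 (\<lambda>x. 1/2 + (-1/2) * chi (l j x))"
        using M sp span0_const[OF G] span0_scale span0_add by blast
      thus "span0 U0 (\<lambda>x. (1 - chi (l j x))/2)" by (simp add: diff_divide_distrib)
    qed
    hence "span0 U0 (\<lambda>x. 1 + (-2) * (\<Prod>j\<in>M. (1 - chi (l j x))/2))"
      using span0_const[OF G] span0_scale span0_add by blast
    thus "span0 U0 (\<lambda>x. 1 - 2 * (\<Prod>j\<in>M. (1 - chi (l j x))/2))" by simp
  qed
  thus ?thesis using eq by simp
qed

end

context GF begin

lemma bit_rpoly: "(\<And>j. bit (l j::'a)) \<Longrightarrow> bit (eval_rpoly S l)"
  unfolding eval_rpoly_def by (intro bit_sum bit_prod) auto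

lemma comp_bent:
  assumes l: "l \<in> subfield k" "l \<noteq> 0"
    and w: "\<omega> \<in> subfield (2*k)" "\<omega>^(q+1) = 1" "\<omega> \<noteq> (1::'a)"
    and u0: "u0 \<in> subfield (2*k)"
    and v: "\<forall>j\<in>J. \<exists>t\<in>subfield k. v j = u0 * t"
    and S: "S \<subseteq> Pow J"
    and T: "bit T"
  shows "is_bent n (\<lambda>x. trace n (l*\<omega>*x^(q+1)) + T * eval_rpoly S (\<lambda>j. trace n (v j * x)))"
proof -
  define U0 where "U0 = {y. \<exists>t\<in>subfield k. y = u0 * t}"
  have G0: "subgrp U0" unfolding subgrp_def U0_def
  proof (intro conjI ballI)
    show "0 \<in> {y. \<exists>t\<in>subfield k. y = u0 * t}" by (auto intro: bexI[of _ 0])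
  next
    fix a b assume "a \<in> {y. \<exists>t\<in>subfield k. y = u0 * t}" "b \<in> {y. \<exists>t\<in>subfield k. y = u0 * t}"
    then obtain ta tb where "ta \<in> subfield k" "tb \<in> subfield k" "a = u0 * ta" "b = u0 * tb" by auto
    thus "a + b \<in> {y. \<exists>t\<in>subfield k. y = u0 * t}"
      by (auto intro!: bexI[of _ "ta + tb"] sub_add simp: distrib_left)
  qed
  have vU: "v j \<in> U0" if "j \<in> J" for j using v that by (auto simp: U0_def)
  define G where "G x = eval_rpoly S (\<lambda>j. trace n (v j * x))" for x
  define f where "f x = trace n (l*\<omega>*x^(q+1)) + T * G x" for x
  define \<mu> where "\<mu> = l * \<omega>"
  have bG: "bit (G x)" for x unfolding G_def by (intro bit_rpoly bit_trace)
  have bTG: "bit (T * G x)" for x using T bG by (rule bit_mult)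
  have bf: "bit (f x)" for x unfolding f_def by (intro bit_add bit_trace bTG)
  have mu0: "\<mu> \<noteq> 0" using l w by (auto simp: \<mu>_def)
  have muc: "\<mu>^((q-1)*(q^2+1)) \<noteq> 1" unfolding \<mu>_def using mu_cond l w by blast
  have "(\<Sum>x\<in>UNIV. chi (f x) * chi (f (x + e))) = 0" if e0: "e \<noteq> 0" for e
  proof -
    define w' where "w' = Lm \<mu> e"
    have w'0: "w' \<noteq> 0" using L_inj[OF mu0 muc] e0 by (auto simp: w'_def)
    define K where "K = chi (trace n (\<mu> * e^(q+1)))"
    have key: "chi (f x) * chi (f (x + e)) = K * (chi (trace n (w' * x)) * (chi (T * G x) * chi (T * G (x + e))))" for x
    proof -
      have eq1: "f (x + e) + f x = (trace n (\<mu>*(x+e)^(q+1)) + trace n (\<mu>*x^(q+1))) + (T*G x + T*G(x+e))"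
        unfolding f_def \<mu>_def by (simp only: mult.assoc add.assoc add.left_commute add.commute)
      have eq2: "f (x + e) + f x = (trace n (w' * x) + trace n (\<mu> * e^(q+1))) + (T * G x + T * G (x + e))"
        unfolding eq1 w'_def by (simp only: quad_deriv)
      have "chi (f x) * chi (f (x + e)) = chi (f (x + e) + f x)"
        using chi_add[OF bf bf, of "x+e" x] by (simp only: mult.commute)
      also have "\<dots> = chi (trace n (w' * x) + trace n (\<mu> * e^(q+1))) * chi (T * G x + T * G (x + e))"
        unfolding eq2 by (intro chi_add bit_add bit_trace bTG)
      also have "\<dots> = (chi (trace n (w' * x)) * K) * (chi (T * G x) * chi (T * G (x + e)))"
        unfolding K_def by (simp only: chi_add bit_trace bTG)
      finally show ?thesis by (simp add: ac_simps)
    qed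
    have "(\<Sum>x\<in>UNIV. chi (f x) * chi (f (x + e)))
        = K * (\<Sum>x\<in>UNIV. chi (trace n (w' * x)) * (chi (T * G x) * chi (T * G (x + e))))"
      by (simp add: key sum_distrib_left)
    also have "(\<Sum>x\<in>UNIV. chi (trace n (w' * x)) * (chi (T * G x) * chi (T * G (x + e)))) = 0"
    proof (cases "w' \<in> U0")
      case True
      then obtain t where t: "t \<in> subfield k" "w' = u0 * t" by (auto simp: U0_def)
      have tr0: "trace n (v j * e) = 0" if "j \<in> J" for j
      proof -
        have "\<exists>s\<in>subfield k. v j = u0 * s" using v that by simp
        then obtain s where s: "s \<in> subfield k" "v j = u0 * s" by (elim bexE) simp
        have "trace n (u0 * s * e) = 0"
          using L_preimage[OF l w u0 t(1) _ s(1)] t(2) by (simp add: w'_def \<mu>_def)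
        thus ?thesis using s by simp
      qed
      have "G (x + e) = G x" for x
        unfolding G_def eval_rpoly_def
      proof (intro sum.cong prod.cong refl)
        fix M j assume "M \<in> S" "j \<in> M"
        hence "j \<in> J" using S by auto
        thus "trace n (v j * (x + e)) = trace n (v j * x)"
          using tr0 by (simp add: distrib_left trace_add)
      qed
      hence "(\<Sum>x\<in>UNIV. chi (trace n (w' * x)) * (chi (T * G x) * chi (T * G (x + e))))
           = (\<Sum>x\<in>UNIV. chi (trace n (w' * x)))" by simp
      also have "\<dots> = 0" using balanced[OF w'0] .
      finally show ?thesis .
    next
      case False
      have A: "span0 U0 (\<lambda>x. chi (T * G x))"
      proof (cases "T = 0")
        case True thus ?thesis using span0_const[OF G0, of 1] by simp
      next
        case False
        hence T1: "T = 1" using T by (simp add: bit_def)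
        have "span0 U0 (\<lambda>x. chi (eval_rpoly S (\<lambda>j. trace n (v j * x))))"
          by (rule span0_chi_rpoly[OF G0]) (use S in \<open>auto intro!: bit_trace span0_gen vU\<close>)
        thus ?thesis by (simp add: T1 G_def)
      qed
      have B: "span0 U0 (\<lambda>x. chi (T * G (x + e)))"
      proof (cases "T = 0")
        case True thus ?thesis using span0_const[OF G0, of 1] by simp
      next
        case False
        hence T1: "T = 1" using T by (simp add: bit_def)
        have "span0 U0 (\<lambda>x. chi (eval_rpoly S (\<lambda>j. trace n (v j * (x + e)))))"
        proof (rule span0_chi_rpoly[OF G0])
          fix M j assume "M \<in> S" "j \<in> M"
          hence "j \<in> J" using S by auto
          hence sp: "span0 U0 (\<lambda>x. chi (trace n (v j * e)) * chi (trace n (v j * x)))"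
            by (intro span0_scale span0_gen vU)
          have "chi (trace n (v j * (x + e))) = chi (trace n (v j * e)) * chi (trace n (v j * x))" for x
          proof -
            have "trace n (v j * (x + e)) = trace n (v j * e) + trace n (v j * x)"
              by (simp add: distrib_left trace_add add.commute)
            thus ?thesis using chi_add[OF bit_trace bit_trace] by simp
          qed
          thus "span0 U0 (\<lambda>x. chi (trace n (v j * (x + e))))" using sp by simp
        qed (rule bit_trace)
        thus ?thesis by (simp add: T1 G_def)
      qed
      show ?thesis by (rule span0_orth[OF G0 span0_mult[OF G0 A B] False])
    qed
    finally show ?thesis by simp
  qed
  hence "is_bent n f" by (intro bent_from_deriv bf) auto
  thus ?thesis unfolding f_def[abs_def] G_def[abs_def] .
qed

end

context GF begin

lemma norm_sub: "u \<in> subfield (2*k) \<Longrightarrow> (u::'a)^(q+1) \<in> subfield k"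
proof -
  assume u: "u \<in> subfield (2*k)"
  have "(u^(q+1))^q = (u^q)^q * u^q" by (simp add: power_mult_distrib power_add power_mult[symmetric] algebra_simps)
  also have "(u^q)^q = u" using q2_pow[OF u] by (simp add: power_mult[symmetric] power2_eq_square)
  finally show ?thesis by (simp add: subfield_def algebra_simps)
qed

lemma u_in_U0:
  assumes u_nz: "\<forall>i\<in>{1..k}. u i \<in> subfield (2 * k) \<and> u i \<noteq> (0::'a)"
    and u_rel: "\<forall>i j. 1 \<le> i \<and> i < j \<and> j \<le> k \<longrightarrow>
                   u i * u j ^ (2 ^ k) \<in> subfield k \<and> u i * u j ^ (2 ^ k) \<noteq> 0"
    and i: "i \<in> {1..k}"
  shows "\<exists>t\<in>subfield k. u i = u 1 * t"
proof (cases "i = 1")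
  case True thus ?thesis by (auto intro: bexI[of _ 1])
next
  case False
  hence "1 \<le> (1::nat) \<and> 1 < i \<and> i \<le> k" using i by auto
  hence r: "u 1 * u i ^ q \<in> subfield k" "u 1 * u i ^ q \<noteq> 0" using u_rel by blast+
  have ui: "u i \<in> subfield (2*k)" "u i \<noteq> 0" using u_nz i by auto
  have u1: "u 1 \<noteq> 0" using u_nz k2 by auto
  define t where "t = u i^(q+1) / (u 1 * u i ^ q)"
  have "t \<in> subfield k" unfolding t_def by (intro sub_div norm_sub ui r)
  moreover have "u i = u 1 * t" using ui u1 by (simp add: t_def field_simps power_add)
  ultimately show ?thesis by blast
qed

lemma vb_part:
  fixes u :: "nat \<Rightarrow> 'a" and \<omega> :: 'a
  assumes tau: "1 \<le> \<tau>" "\<tau> \<le> k"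
    and u_nz: "\<forall>i\<in>{1..k}. u i \<in> subfield (2 * k) \<and> u i \<noteq> 0"
    and u_rel: "\<forall>i j. 1 \<le> i \<and> i < j \<and> j \<le> k \<longrightarrow>
                   u i * u j ^ (2 ^ k) \<in> subfield k \<and> u i * u j ^ (2 ^ k) \<noteq> 0"
    and F: "S \<subseteq> Pow {1..\<tau>}"
    and gen: "\<omega> \<in> unit_circle k" "unit_circle k \<subseteq> range (\<lambda>m::nat. \<omega> ^ m)"
    and idx: "\<iota> ` {1..\<tau>} \<subseteq> {1..k}"
    and H: "H = (\<lambda>x. trace4 k (\<omega> * x ^ (2 ^ k + 1))
                     + eval_rpoly S (\<lambda>j. trace (4 * k) (u (\<iota> j) * x)))"
  shows "vectorial_bent (4 * k) k H"
  unfolding vectorial_bent_def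
proof (intro allI impI, elim conjE)
  fix l :: 'a assume l: "l \<in> subfield k" "l \<noteq> 0"
  have w: "\<omega> \<in> subfield (2*k)" "\<omega>^(q+1) = 1" using gen(1) by (auto simp: unit_circle_def)
  have w1: "\<omega> \<noteq> 1" using omega_ne1[OF gen] .
  have u0: "u 1 \<in> subfield (2*k)" using u_nz k2 by auto
  have v: "\<forall>j\<in>{1..\<tau>}. \<exists>t\<in>subfield k. u (\<iota> j) = u 1 * t"
    using u_in_U0[OF u_nz u_rel] idx by blast
  have T: "bit (trace k l)" using bit_trace_k[OF l(1)] .
  have "is_bent n (\<lambda>x. trace n (l*\<omega>*x^(q+1)) + trace k l * eval_rpoly S (\<lambda>j. trace n (u (\<iota> j) * x)))"
    by (rule comp_bent[OF l w w1 u0 v F T])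
  moreover have "trace k (l * H x) = trace n (l*\<omega>*x^(q+1)) + trace k l * eval_rpoly S (\<lambda>j. trace n (u (\<iota> j) * x))" for x
  proof -
    have bG: "bit (eval_rpoly S (\<lambda>j. trace n (u (\<iota> j) * x)))" by (intro bit_rpoly bit_trace)
    have "trace k (l * H x) = trace k (l * trace4 k (\<omega> * x^(q+1))) + trace k (l * eval_rpoly S (\<lambda>j. trace n (u (\<iota> j) * x)))"
      by (simp add: H distrib_left trace_add)
    also have "\<dots> = trace n (l*\<omega>*x^(q+1)) + trace k l * eval_rpoly S (\<lambda>j. trace n (u (\<iota> j) * x))"
    proof -
      have a1: "trace k (l * trace4 k (\<omega> * x^(q+1))) = trace n (l*\<omega>*x^(q+1))"
        using trace_k_trace4[OF l(1), of "\<omega>*x^(q+1)"] by (simp only: mult.assoc)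
      have a2: "trace k (l * eval_rpoly S (\<lambda>j. trace n (u (\<iota> j) * x))) = trace k l * eval_rpoly S (\<lambda>j. trace n (u (\<iota> j) * x))"
        using trace_k_bit_mult[OF bG, of l] by (simp only: mult.commute)
      show ?thesis by (simp only: a1 a2)
    qed
    finally show ?thesis .
  qed
  ultimately show "is_bent (4 * k) (\<lambda>x. trace k (l * H x))" by simp
qed

end

context GF begin

lemma sum_symdiff:
  assumes "finite A" "finite B"
  shows "(\<Sum>i\<in>A. b i) + (\<Sum>i\<in>B. b i) = (\<Sum>i\<in>(A-B) \<union> (B-A). (b i::'a))"
proof -
  have e1: "A - A \<inter> B = A - B" "B - A \<inter> B = B - A" by blast+
  have "(\<Sum>i\<in>A. b i) = (\<Sum>i\<in>A-B. b i) + (\<Sum>i\<in>A\<inter>B. b i)"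
    using sum.subset_diff[of "A\<inter>B" A b] assms e1 by simp
  moreover have "(\<Sum>i\<in>B. b i) = (\<Sum>i\<in>B-A. b i) + (\<Sum>i\<in>A\<inter>B. b i)"
    using sum.subset_diff[of "A\<inter>B" B b] assms e1 by simp
  moreover have "(\<Sum>i\<in>(A-B) \<union> (B-A). b i) = (\<Sum>i\<in>A-B. b i) + (\<Sum>i\<in>B-A. b i)"
    using assms by (intro sum.union_disjoint) auto
  ultimately show ?thesis by (simp add: algebra_simps)
qed

lemma solve2: "a + x = (c::'a) \<Longrightarrow> x = a + c"
proof -
  assume h: "a + x = c"
  have "a + c = a + (a + x)" using h by simp
  also have "\<dots> = (a + a) + x" by (simp only: add.assoc)
  also have "\<dots> = x" by simp
  finally show ?thesis by simp
qed

lemma sum_in_V: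
  assumes "0 \<in> V" "\<forall>x\<in>V. \<forall>y\<in>V. x+y \<in> V" "\<forall>i\<in>X. b i \<in> V"
  shows "(\<Sum>i\<in>X. (b i::'a)) \<in> V"
  using assms(3)
  by (induction X rule: infinite_finite_induct) (use assms in auto)

lemma basis_exists:
  assumes V0: "0 \<in> V" and Vadd: "\<forall>x\<in>V. \<forall>y\<in>V. x+y \<in> V" and cV: "card (V::'a set) = 2^m"
  shows "\<exists>b. F2_basis m b V"
proof -
  have P: "\<exists>b. (\<forall>i<j. b i \<in> V) \<and> inj_on (\<lambda>X. \<Sum>i\<in>X. b i) (Pow {..<j})" if "j \<le> m" for j
    using that
  proof (induction j)
    case 0
    show ?case by (auto simp: inj_on_def)
  next
    case (Suc j)
    then obtain b where bV: "\<forall>i<j. b i \<in> V" and inj: "inj_on (\<lambda>X. \<Sum>i\<in>X. b i) (Pow {..<j})" by auto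
    define I where "I = (\<lambda>X. \<Sum>i\<in>X. b i) ` Pow {..<j}"
    have cI: "card I = 2^j" unfolding I_def using card_image[OF inj] by (simp add: card_Pow)
    have IV: "I \<subseteq> V" unfolding I_def
    proof (rule image_subsetI)
      fix X assume "X \<in> Pow {..<j}"
      thus "(\<Sum>i\<in>X. b i) \<in> V" using bV by (intro sum_in_V[OF V0 Vadd]) auto
    qed
    have "card I < card V" using cI cV Suc.prems by simp
    then obtain x where x: "x \<in> V" "x \<notin> I" using IV by (metis card_mono finite subsetI leD)
    define b' where "b' = b(j := x)"
    have sb: "(\<Sum>i\<in>X. b' i) = (\<Sum>i\<in>X-{j}. b i) + (if j \<in> X then x else 0)" if "X \<subseteq> {..<Suc j}" for X
    proof -
      have "(\<Sum>i\<in>X. b' i) = (\<Sum>i\<in>X-{j}. b' i) + (if j \<in> X then b' j else 0)"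
        using sum.remove[OF finite_subset[OF that finite_lessThan], of j b']
        by (cases "j \<in> X") (auto simp: add.commute)
      moreover have "(\<Sum>i\<in>X-{j}. b' i) = (\<Sum>i\<in>X-{j}. b i)" by (intro sum.cong) (auto simp: b'_def)
      ultimately show ?thesis by (simp add: b'_def)
    qed
    have inj': "inj_on (\<lambda>X. \<Sum>i\<in>X. b' i) (Pow {..<Suc j})"
    proof (rule inj_onI)
      fix X Y assume X: "X \<in> Pow {..<Suc j}" and Y: "Y \<in> Pow {..<Suc j}"
        and eq: "(\<Sum>i\<in>X. b' i) = (\<Sum>i\<in>Y. b' i)"
      have X0: "X - {j} \<in> Pow {..<j}" and Y0: "Y - {j} \<in> Pow {..<j}" using X Y by auto
      have fin: "finite (X - {j})" "finite (Y - {j})"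
        using finite_subset[of "X - {j}" "{..<j}"] finite_subset[of "Y - {j}" "{..<j}"] X0 Y0 by auto
      have eq2: "(\<Sum>i\<in>X-{j}. b i) + (if j \<in> X then x else 0) = (\<Sum>i\<in>Y-{j}. b i) + (if j \<in> Y then x else 0)"
        using eq sb X Y by auto
      show "X = Y"
      proof (cases "j \<in> X \<longleftrightarrow> j \<in> Y")
        case True
        hence "(\<Sum>i\<in>X-{j}. b i) = (\<Sum>i\<in>Y-{j}. b i)" using eq2 by (cases "j \<in> X") auto
        hence "X - {j} = Y - {j}" using inj X0 Y0 by (auto dest: inj_onD)
        thus ?thesis using True by blast
      next
        case False
        hence "x = (\<Sum>i\<in>X-{j}. b i) + (\<Sum>i\<in>Y-{j}. b i)"
        proof (cases "j \<in> X")
          case True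
          hence "(\<Sum>i\<in>X-{j}. b i) + x = (\<Sum>i\<in>Y-{j}. b i)" using eq2 False by simp
          thus ?thesis by (rule solve2)
        next
          case F2: False
          hence "(\<Sum>i\<in>Y-{j}. b i) + x = (\<Sum>i\<in>X-{j}. b i)" using eq2 False by simp
          hence "x = (\<Sum>i\<in>Y-{j}. b i) + (\<Sum>i\<in>X-{j}. b i)" by (rule solve2)
          thus ?thesis by (simp only: add.commute)
        qed
        also have "\<dots> = (\<Sum>i\<in>((X-{j}) - (Y-{j})) \<union> ((Y-{j}) - (X-{j})). b i)"
          using fin by (rule sum_symdiff)
        finally have "x \<in> I" unfolding I_def using X0 Y0 by auto
        thus ?thesis using x by simp
      qed
    qed
    moreover have "\<forall>i<Suc j. b' i \<in> V" using bV x by (auto simp: b'_def less_Suc_eq)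
    ultimately show ?case by blast
  qed
  obtain b where bV: "\<forall>i<m. b i \<in> V" and inj: "inj_on (\<lambda>X. \<Sum>i\<in>X. b i) (Pow {..<m})"
    using P[of m] by auto
  define I where "I = (\<lambda>X. \<Sum>i\<in>X. b i) ` Pow {..<m}"
  have cI: "card I = 2^m" unfolding I_def using card_image[OF inj] by (simp add: card_Pow)
  have IV: "I \<subseteq> V" unfolding I_def
  proof (rule image_subsetI)
    fix X assume "X \<in> Pow {..<m}"
    thus "(\<Sum>i\<in>X. b i) \<in> V" using bV by (intro sum_in_V[OF V0 Vadd]) auto
  qed
  have "I = V" using IV cI cV by (intro card_subset_eq) auto
  hence "bij_betw (\<lambda>X. \<Sum>i\<in>X. b i) (Pow {..<m}) V" using inj unfolding bij_betw_def I_def by simp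
  thus ?thesis unfolding F2_basis_def by blast
qed

end

context GF begin

lemma trace4_add: "trace4 k (x + y) = trace4 k x + trace4 k (y::'a)"
  by (simp add: trace4_def frob algebra_simps)

lemma card_Fq: "card (subfield k :: 'a set) = q"
proof (rule antisym)
  have q1: "q \<noteq> 1" using k2 by simp
  define c where "c = (\<lambda>i::nat. (1::'a))"
  have "card {x::'a. (\<Sum>i\<in>{1,q}. c i * x^i) = 0} \<le> q"
    by (rule card_roots_le) (use q_ge4 k2 in \<open>auto simp: c_def\<close>)
  moreover have "{x::'a. (\<Sum>i\<in>{1,q}. c i * x^i) = 0} = subfield k"
  proof -
    have nq: "(1::nat) \<notin> {q}" using q_ge4 by auto
    have "(\<Sum>i\<in>{1,q}. c i * x^i) = x + x^q" for x :: 'a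
      using sum.insert[OF _ nq, of "\<lambda>i. c i * x^i"] by (simp add: c_def)
    thus ?thesis by (auto simp: subfield_def add_eq0_iff)
  qed
  ultimately show "card (subfield k :: 'a set) \<le> q" by simp
next
  define K where "K = {y::'a. trace4 k y = 0}"
  have d: "q \<noteq> 1" "q \<noteq> q^2" "q \<noteq> q^3" "q^2 \<noteq> 1" "q^3 \<noteq> 1" "q^2 \<noteq> q^3" "q \<noteq> 0"
    using q_ge4 by (auto simp: power_eq_if eval_nat_numeral)
  define c where "c = (\<lambda>i::nat. (1::'a))"
  have "card {x::'a. (\<Sum>i\<in>{1,q,q^2,q^3}. c i * x^i) = 0} \<le> q^3"
    by (rule card_roots_le) (use q_ge4 in \<open>auto simp: c_def power_increasing eval_nat_numeral\<close>)
  moreover have "{x::'a. (\<Sum>i\<in>{1,q,q^2,q^3}. c i * x^i) = 0} = K"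
  proof -
    have "(\<Sum>i\<in>{1,q,q^2,q^3}. c i * x^i) = trace4 k x" for x
    proof -
      obtain a b e f where abef: "a = (1::nat)" "b = q" "e = q^2" "f = q^3" by blast
      have g1: "1 < q" "1 < q^2" "1 < q^3" using q_ge4 one_less_power[of q 2] one_less_power[of q 3] by auto
      have "a \<noteq> b" "a \<noteq> e" "a \<noteq> f" "b \<noteq> e" "b \<noteq> f" "e \<noteq> f" using d abef g1 by auto
      hence "(\<Sum>i\<in>{a,b,e,f}. c i * x^i) = x^a + x^b + x^e + x^f" by (simp add: c_def ac_simps)
      thus ?thesis unfolding abef trace4_def q2e q3e by simp
    qed
    thus ?thesis by (simp add: K_def)
  qed
  ultimately have cK: "card K \<le> q^3" by simp
  have fib: "card {y::'a. trace4 k y = z} \<le> card K" for z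
  proof (cases "\<exists>y0. trace4 k y0 = z")
    case True
    then obtain y0 where y0: "trace4 k y0 = z" by blast
    have "{y::'a. trace4 k y = z} \<subseteq> (\<lambda>w. w + y0) ` K"
    proof
      fix y assume "y \<in> {y. trace4 k y = z}"
      hence "y + y0 \<in> K" using y0 by (simp add: K_def trace4_add)
      moreover have "y = (y + y0) + y0" by (simp add: add.assoc)
      ultimately show "y \<in> (\<lambda>w. w + y0) ` K" by blast
    qed
    hence "card {y::'a. trace4 k y = z} \<le> card ((\<lambda>w. w + y0) ` K)" by (intro card_mono) auto
    also have "\<dots> \<le> card K" by (rule card_image_le) simp
    finally show ?thesis .
  qed simp
  have "UNIV = (\<Union>z\<in>subfield k. {y::'a. trace4 k y = z})" using trace4_sub by auto
  hence "card (UNIV::'a set) \<le> (\<Sum>z\<in>subfield k. card {y::'a. trace4 k y = z})"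
    by (metis card_UN_le finite)
  also have "\<dots> \<le> card (subfield k :: 'a set) * card K"
    using sum_bounded_above[of "subfield k" "\<lambda>z. card {y::'a. trace4 k y = z}" "card K"] fib by simp
  also have "\<dots> \<le> card (subfield k :: 'a set) * q^3" using cK by (simp add: mult_le_mono2)
  finally have "q^3 * q \<le> q^3 * card (subfield k :: 'a set)"
    using cardA q4e by (simp add: mult.commute power_Suc[symmetric] eval_nat_numeral)
  thus "q \<le> card (subfield k :: 'a set)" using q_ge4 by simp
qed

lemma Fq_basis: "\<exists>c. F2_basis k c (subfield k :: 'a set)"
  by (rule basis_exists) (auto simp: card_Fq intro: sub_add)

lemma UNIV_basis: "\<exists>b. F2_basis n b (UNIV :: 'a set)"
  by (rule basis_exists) (auto simp: cardA)

lemma of_nat_card_filter: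
  "finite A \<Longrightarrow> (of_nat (card {x\<in>A. P x}) :: 'a) = (\<Sum>x\<in>A. if P x then 1 else 0)"
  by (simp add: sum.inter_filter[symmetric])

lemma of_nat_pow2: "(of_nat (2^j) :: 'a) = (if j = 0 then 1 else 0)"
  by (cases j) auto

lemma cnt_sup:
  assumes "finite X" "Y \<subseteq> X"
  shows "card {M\<in>Pow X. Y \<subseteq> M} = 2^(card (X - Y))"
proof -
  have "bij_betw (\<lambda>Z. Z \<union> Y) (Pow (X - Y)) {M\<in>Pow X. Y \<subseteq> M}"
    unfolding bij_betw_def
  proof
    show "inj_on (\<lambda>Z. Z \<union> Y) (Pow (X - Y))" by (auto simp: inj_on_def)
    show "(\<lambda>Z. Z \<union> Y) ` Pow (X - Y) = {M \<in> Pow X. Y \<subseteq> M}"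
    proof
      show "(\<lambda>Z. Z \<union> Y) ` Pow (X - Y) \<subseteq> {M \<in> Pow X. Y \<subseteq> M}" using assms by auto
      show "{M \<in> Pow X. Y \<subseteq> M} \<subseteq> (\<lambda>Z. Z \<union> Y) ` Pow (X - Y)"
      proof
        fix M assume "M \<in> {M \<in> Pow X. Y \<subseteq> M}"
        hence "M = (M - Y) \<union> Y" "M - Y \<in> Pow (X - Y)" by auto
        thus "M \<in> (\<lambda>Z. Z \<union> Y) ` Pow (X - Y)" by blast
      qed
    qed
  qed
  hence "card {M\<in>Pow X. Y \<subseteq> M} = card (Pow (X - Y))" by (simp add: bij_betw_same_card)
  also have "\<dots> = 2^(card (X - Y))" using assms by (simp add: card_Pow)
  finally show ?thesis .
qed

lemma cnt_sup_a:
  assumes "finite X" "Y \<subseteq> X"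
  shows "(of_nat (card {M\<in>Pow X. Y \<subseteq> M}) :: 'a) = (if Y = X then 1 else 0)"
proof -
  have "card (X - Y) = 0 \<longleftrightarrow> Y = X" using assms by auto
  thus ?thesis using cnt_sup[OF assms] of_nat_pow2 by simp
qed

lemma mobius:
  assumes M: "finite M" and S: "finite S"
  shows "(\<Sum>Y\<in>Pow M. (of_nat (card {N\<in>S. N \<subseteq> Y}) :: 'a)) = (if M \<in> S then 1 else 0)"
proof -
  have "(\<Sum>Y\<in>Pow M. (of_nat (card {N\<in>S. N \<subseteq> Y}) :: 'a))
      = (\<Sum>Y\<in>Pow M. \<Sum>N\<in>S. if N \<subseteq> Y then 1 else 0)"
    using S by (simp add: of_nat_card_filter)
  also have "\<dots> = (\<Sum>N\<in>S. \<Sum>Y\<in>Pow M. if N \<subseteq> Y then 1 else 0)" by (rule sum.swap)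
  also have "\<dots> = (\<Sum>N\<in>S. if N = M then 1 else 0)"
  proof (rule sum.cong[OF refl])
    fix N assume "N \<in> S"
    have "(\<Sum>Y\<in>Pow M. if N \<subseteq> Y then 1 else (0::'a)) = of_nat (card {Y\<in>Pow M. N \<subseteq> Y})"
      using of_nat_card_filter[of "Pow M" "\<lambda>Y. N \<subseteq> Y"] M by simp
    also have "\<dots> = (if N = M then 1 else 0)"
    proof (cases "N \<subseteq> M")
      case True thus ?thesis using cnt_sup_a[OF M True] by simp
    next
      case False
      hence e: "{Y\<in>Pow M. N \<subseteq> Y} = {}" by auto
      have "N \<noteq> M" using False by auto
      thus ?thesis by (simp only: e card.empty of_nat_0) simp
    qed
    finally show "(\<Sum>Y\<in>Pow M. if N \<subseteq> Y then 1 else (0::'a)) = (if N = M then 1 else 0)" .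
  qed
  also have "\<dots> = (if M \<in> S then 1 else 0)" using S by (simp add: sum.delta')
  finally show ?thesis .
qed

lemma anf_fin: "anf_rep m b f S \<Longrightarrow> finite S"
  unfolding anf_rep_def by (meson finite_Pow_iff finite_lessThan finite_subset)

lemma anf_mobius:
  assumes A: "anf_rep m b f S" and M: "M \<in> Pow {..<m}"
  shows "(\<Sum>Y\<in>Pow M. f (\<Sum>i\<in>Y. b i)) = (if M \<in> S then 1 else (0::'a))"
proof -
  have fM: "finite M" using M finite_subset by auto
  have "(\<Sum>Y\<in>Pow M. f (\<Sum>i\<in>Y. b i)) = (\<Sum>Y\<in>Pow M. (of_nat (card {N\<in>S. N \<subseteq> Y}) :: 'a))"
    using A M unfolding anf_rep_def by (intro sum.cong refl) auto
  also have "\<dots> = (if M \<in> S then 1 else 0)" by (rule mobius[OF fM anf_fin[OF A]])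
  finally show ?thesis .
qed

lemma anf_unique:
  fixes f :: "'a \<Rightarrow> 'a"
  assumes "anf_rep m b f S1" "anf_rep m b f S2"
  shows "S1 = S2"
proof -
  have "M \<in> S1 \<longleftrightarrow> M \<in> S2" if "M \<in> Pow {..<m}" for M
    using anf_mobius[OF assms(1) that] anf_mobius[OF assms(2) that]
    by (cases "M \<in> S1"; cases "M \<in> S2") auto
  moreover have "S1 \<subseteq> Pow {..<m}" "S2 \<subseteq> Pow {..<m}" using assms by (auto simp: anf_rep_def)
  ultimately show ?thesis by blast
qed

lemma anf_exists:
  assumes bits: "\<And>x. bit (f x::'a)"
  shows "\<exists>S. anf_rep m b f S"
proof -
  define s where "s M = (\<Sum>Y\<in>Pow M. f (\<Sum>i\<in>Y. b i))" for M
  define S where "S = {M\<in>Pow {..<m}. s M \<noteq> 0}"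
  have bs: "bit (s M)" for M unfolding s_def by (intro bit_sum bits)
  have "f (\<Sum>i\<in>X. b i) = of_nat (card {M\<in>S. M \<subseteq> X})" if X: "X \<in> Pow {..<m}" for X
  proof -
    have fX: "finite X" using X finite_subset by auto
    have "{M\<in>S. M \<subseteq> X} = {M\<in>Pow X. s M \<noteq> 0}" using X by (auto simp: S_def)
    hence "(of_nat (card {M\<in>S. M \<subseteq> X}) :: 'a) = (\<Sum>M\<in>Pow X. if s M \<noteq> 0 then 1 else 0)"
      using of_nat_card_filter[of "Pow X" "\<lambda>M. s M \<noteq> 0"] fX by simp
    also have "\<dots> = (\<Sum>M\<in>Pow X. s M)"
      using bs by (intro sum.cong refl) (auto simp: bit_def)
    also have "\<dots> = (\<Sum>M\<in>Pow X. \<Sum>Y\<in>Pow X. if Y \<subseteq> M then f (\<Sum>i\<in>Y. b i) else 0)"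
    proof (rule sum.cong[OF refl])
      fix M assume MX: "M \<in> Pow X"
      have "(\<Sum>Y\<in>Pow X. if Y \<subseteq> M then f (\<Sum>i\<in>Y. b i) else 0) = (\<Sum>Y\<in>{Y\<in>Pow X. Y \<subseteq> M}. f (\<Sum>i\<in>Y. b i))"
        using sum.inter_filter[of "Pow X" "\<lambda>Y. f (\<Sum>i\<in>Y. b i)" "\<lambda>Y. Y \<subseteq> M"] fX by simp
      also have "{Y\<in>Pow X. Y \<subseteq> M} = Pow M" using MX by auto
      finally show "s M = (\<Sum>Y\<in>Pow X. if Y \<subseteq> M then f (\<Sum>i\<in>Y. b i) else 0)" by (simp add: s_def)
    qed
    also have "\<dots> = (\<Sum>Y\<in>Pow X. \<Sum>M\<in>Pow X. if Y \<subseteq> M then f (\<Sum>i\<in>Y. b i) else 0)" by (rule sum.swap)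
    also have "\<dots> = (\<Sum>Y\<in>Pow X. f (\<Sum>i\<in>Y. b i) * of_nat (card {M\<in>Pow X. Y \<subseteq> M}))"
    proof (rule sum.cong[OF refl])
      fix Y assume "Y \<in> Pow X"
      have "(\<Sum>M\<in>Pow X. if Y \<subseteq> M then f (\<Sum>i\<in>Y. b i) else 0)
          = (\<Sum>M\<in>Pow X. f (\<Sum>i\<in>Y. b i) * (if Y \<subseteq> M then 1 else 0))" by (intro sum.cong) auto
      also have "\<dots> = f (\<Sum>i\<in>Y. b i) * (\<Sum>M\<in>Pow X. if Y \<subseteq> M then 1 else 0)"
        by (simp only: sum_distrib_left)
      also have "(\<Sum>M\<in>Pow X. if Y \<subseteq> M then 1 else (0::'a)) = of_nat (card {M\<in>Pow X. Y \<subseteq> M})"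
        using of_nat_card_filter[of "Pow X" "\<lambda>M. Y \<subseteq> M"] fX by simp
      finally show "(\<Sum>M\<in>Pow X. if Y \<subseteq> M then f (\<Sum>i\<in>Y. b i) else 0)
          = f (\<Sum>i\<in>Y. b i) * of_nat (card {M\<in>Pow X. Y \<subseteq> M})" .
    qed
    also have "\<dots> = (\<Sum>Y\<in>Pow X. if Y = X then f (\<Sum>i\<in>Y. b i) else 0)"
      by (intro sum.cong refl) (subst cnt_sup_a[OF fX], auto)
    also have "\<dots> = f (\<Sum>i\<in>X. b i)" using fX by (simp add: sum.delta')
    finally show ?thesis by simp
  qed
  moreover have "S \<subseteq> Pow {..<m}" by (auto simp: S_def)
  ultimately show ?thesis unfolding anf_rep_def by blast
qed

end

context GF begin

definition additive :: "('a \<Rightarrow> 'a) \<Rightarrow> bool" where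
  "additive \<beta> \<longleftrightarrow> (\<forall>x y. \<beta> (x + y) = \<beta> x + \<beta> y)"

inductive dl :: "nat \<Rightarrow> ('a \<Rightarrow> 'a) \<Rightarrow> bool" where
  dl_const: "dl m (\<lambda>x. c)"
| dl_add: "dl m f \<Longrightarrow> dl m g \<Longrightarrow> dl m (\<lambda>x. f x + g x)"
| dl_mul: "dl m f \<Longrightarrow> additive \<beta> \<Longrightarrow> dl (Suc m) (\<lambda>x. \<beta> x * f x)"
| dl_mono: "dl m f \<Longrightarrow> dl (Suc m) f"

lemma dl_mono_le: assumes "dl m f" "m \<le> m'" shows "dl m' f"
  using assms(2)
proof (induction rule: dec_induct)
  case base show ?case by (rule assms(1))
next
  case (step j) show ?case by (rule dl.dl_mono[OF step.IH])
qed

lemma dl_scale: "dl m f \<Longrightarrow> dl m (\<lambda>x. c * f x)"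
proof (induction rule: dl.induct)
  case (dl_const m c') show ?case using dl.dl_const[of m "c * c'"] .
next
  case (dl_add m f g)
  have "dl m (\<lambda>x. c * f x + c * g x)" using dl_add by (intro dl.dl_add)
  thus ?case by (simp add: distrib_left)
next
  case (dl_mul m f \<beta>)
  have "dl (Suc m) (\<lambda>x. \<beta> x * (c * f x))" using dl_mul by (intro dl.dl_mul)
  thus ?case by (simp add: ac_simps)
next
  case (dl_mono m f) thus ?case by (intro dl.dl_mono)
qed

lemma dl_shift: "dl m f \<Longrightarrow> dl m (\<lambda>x. f (x + a))"
proof (induction rule: dl.induct)
  case (dl_const m c) show ?case by (rule dl.dl_const)
next
  case (dl_add m f g) thus ?case by (intro dl.dl_add)
next
  case (dl_mul m f \<beta>)
  have "dl (Suc m) (\<lambda>x. \<beta> x * f (x + a) + \<beta> a * f (x + a))"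
    using dl_mul by (intro dl.dl_add dl.dl_mul dl.dl_mono dl_scale)
  moreover have "\<beta> (x + a) = \<beta> x + \<beta> a" for x using dl_mul.hyps(2) by (simp add: additive_def)
  ultimately show ?case by (simp add: distrib_right)
next
  case (dl_mono m f) thus ?case by (intro dl.dl_mono)
qed

lemma dl0_const: "dl m f \<Longrightarrow> m = 0 \<Longrightarrow> f x = f y"
  by (induction rule: dl.induct) auto

lemma dl_deriv: "dl m f \<Longrightarrow> dl (m - 1) (\<lambda>x. f (x + a) + f x)"
proof (induction rule: dl.induct)
  case (dl_const m c) show ?case by (rule dl.dl_const)
next
  case (dl_add m f g)
  have "dl (m - 1) (\<lambda>x. (f (x + a) + f x) + (g (x + a) + g x))" using dl_add.IH by (rule dl.dl_add)
  thus ?case by (simp add: ac_simps)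
next
  case (dl_mul m f \<beta>)
  have ad: "\<beta> (x + a) = \<beta> x + \<beta> a" for x using dl_mul.hyps(2) by (simp add: additive_def)
  have eq: "(\<lambda>x. \<beta> (x + a) * f (x + a) + \<beta> x * f x) = (\<lambda>x. \<beta> x * (f (x + a) + f x) + \<beta> a * f (x + a))"
    by (rule ext) (simp add: ad algebra_simps)
  have p1: "dl m (\<lambda>x. \<beta> x * (f (x + a) + f x))"
  proof (cases m)
    case 0
    hence "f (x + a) + f x = 0" for x using dl0_const[OF dl_mul.hyps(1), of "x+a" x] by simp
    hence "(\<lambda>x. \<beta> x * (f (x + a) + f x)) = (\<lambda>x. 0)" by simp
    thus ?thesis by (simp add: dl.dl_const)
  next
    case (Suc m')
    thus ?thesis using dl_mul by (simp add: dl.dl_mul)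
  qed
  have "dl m (\<lambda>x. \<beta> x * (f (x + a) + f x) + \<beta> a * f (x + a))"
    using p1 dl_mul by (intro dl.dl_add dl_scale dl_shift)
  thus ?case using eq by simp
next
  case (dl_mono m f)
  thus ?case by (auto elim: dl_mono_le)
qed

definition Delta :: "('a \<Rightarrow> 'a) \<Rightarrow> nat set \<Rightarrow> (nat \<Rightarrow> 'a) \<Rightarrow> 'a \<Rightarrow> 'a" where
  "Delta f A a x = (\<Sum>Y\<in>Pow A. f (x + (\<Sum>i\<in>Y. a i)))"

lemma Delta_insert:
  assumes "finite A" "j \<notin> A"
  shows "Delta f (insert j A) a x = Delta (\<lambda>z. f (z + a j) + f z) A a x"
proof -
  have "Pow (insert j A) = Pow A \<union> insert j ` Pow A" by (rule Pow_insert)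
  moreover have "Pow A \<inter> insert j ` Pow A = {}" using assms by auto
  moreover have inj: "inj_on (insert j) (Pow A)" using assms by (auto simp: inj_on_def)
  ultimately have "Delta f (insert j A) a x
      = (\<Sum>Y\<in>Pow A. f (x + (\<Sum>i\<in>Y. a i))) + (\<Sum>Y\<in>Pow A. f (x + (\<Sum>i\<in>insert j Y. a i)))"
    using assms by (simp add: Delta_def sum.union_disjoint sum.reindex)
  also have "(\<Sum>Y\<in>Pow A. f (x + (\<Sum>i\<in>insert j Y. a i))) = (\<Sum>Y\<in>Pow A. f ((x + (\<Sum>i\<in>Y. a i)) + a j))"
  proof (intro sum.cong refl)
    fix Y assume "Y \<in> Pow A"
    hence "finite Y" "j \<notin> Y" using assms finite_subset by auto
    thus "f (x + (\<Sum>i\<in>insert j Y. a i)) = f ((x + (\<Sum>i\<in>Y. a i)) + a j)" by (simp add: ac_simps)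
  qed
  finally show ?thesis by (simp add: Delta_def sum.distrib add.commute)
qed

lemma dl_Delta: "finite A \<Longrightarrow> dl m f \<Longrightarrow> m < card A \<Longrightarrow> Delta f A a x = 0"
proof (induction A arbitrary: f m rule: finite_induct)
  case empty thus ?case by simp
next
  case (insert j A)
  have "Delta f (insert j A) a x = Delta (\<lambda>z. f (z + a j) + f z) A a x"
    using insert by (intro Delta_insert)
  also have "\<dots> = 0"
  proof (cases m)
    case 0
    hence "f (z + a j) + f z = 0" for z using dl0_const[OF insert(4), of "z + a j" z] by simp
    thus ?thesis by (simp add: Delta_def)
  next
    case (Suc m')
    have "dl m' (\<lambda>z. f (z + a j) + f z)" using dl_deriv[OF insert(4), of "a j"] Suc by simp
    moreover have "m' < card A" using insert Suc by simp
    ultimately show ?thesis using insert.IH by blast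
  qed
  finally show ?case .
qed

lemma Delta_add: "Delta (\<lambda>x. f x + g x) A a x = Delta f A a x + Delta g A a x"
  by (simp add: Delta_def sum.distrib)

lemma dl_sum: "(\<And>M. M \<in> S \<Longrightarrow> dl m (g M)) \<Longrightarrow> dl m (\<lambda>x. \<Sum>M\<in>S. g M x)"
proof (induction S rule: infinite_finite_induct)
  case (infinite A) thus ?case by (simp add: dl_const)
next
  case empty thus ?case by (simp add: dl_const)
next
  case (insert a A) thus ?case by (simp add: dl_add)
qed

lemma dl_prod_add: "finite M \<Longrightarrow> (\<And>i. i \<in> M \<Longrightarrow> additive (\<beta> i)) \<Longrightarrow> dl (card M) (\<lambda>x. \<Prod>i\<in>M. \<beta> i x)"
proof (induction M rule: finite_induct)
  case empty thus ?case by (simp add: dl_const)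
next
  case (insert j M) thus ?case by (simp add: dl_mul)
qed

definition Xof :: "(nat \<Rightarrow> 'a) \<Rightarrow> 'a \<Rightarrow> nat set" where
  "Xof b x = (THE X. X \<in> Pow {..<n} \<and> (\<Sum>i\<in>X. b i) = x)"

definition crd :: "(nat \<Rightarrow> 'a) \<Rightarrow> nat \<Rightarrow> 'a \<Rightarrow> 'a" where
  "crd b i x = (if i \<in> Xof b x then 1 else 0)"

lemma Xof_prop:
  assumes "F2_basis n b UNIV"
  shows "Xof b x \<in> Pow {..<n} \<and> (\<Sum>i\<in>Xof b x. b i) = x"
proof -
  have bij: "bij_betw (\<lambda>X. \<Sum>i\<in>X. b i) (Pow {..<n}) UNIV" using assms by (simp add: F2_basis_def)
  have "\<exists>!X. X \<in> Pow {..<n} \<and> (\<Sum>i\<in>X. b i) = x"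
  proof -
    have "x \<in> (\<lambda>X. \<Sum>i\<in>X. b i) ` Pow {..<n}" using bij by (simp add: bij_betw_def)
    then obtain X where "X \<in> Pow {..<n}" "(\<Sum>i\<in>X. b i) = x" by (metis imageE)
    moreover have "Y = X" if "Y \<in> Pow {..<n}" "(\<Sum>i\<in>Y. b i) = x" for Y
      using bij that \<open>X \<in> Pow {..<n}\<close> \<open>(\<Sum>i\<in>X. b i) = x\<close> unfolding bij_betw_def by (auto dest: inj_onD)
    ultimately show ?thesis by blast
  qed
  thus ?thesis unfolding Xof_def by (rule theI')
qed

lemma Xof_sum:
  assumes "F2_basis n b UNIV" "X \<in> Pow {..<n}"
  shows "Xof b (\<Sum>i\<in>X. b i) = X"
proof -
  have bij: "bij_betw (\<lambda>X. \<Sum>i\<in>X. b i) (Pow {..<n}) UNIV" using assms by (simp add: F2_basis_def)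
  have "Xof b (\<Sum>i\<in>X. b i) \<in> Pow {..<n} \<and> (\<Sum>i\<in>Xof b (\<Sum>i\<in>X. b i). b i) = (\<Sum>i\<in>X. b i)"
    by (rule Xof_prop[OF assms(1)])
  thus ?thesis using bij assms(2) unfolding bij_betw_def by (auto dest: inj_onD)
qed

lemma crd_additive:
  assumes B: "F2_basis n b UNIV"
  shows "additive (crd b i)"
  unfolding additive_def
proof (intro allI)
  fix x y
  define X where "X = Xof b x"
  define Y where "Y = Xof b y"
  have X: "X \<in> Pow {..<n}" "(\<Sum>i\<in>X. b i) = x" using Xof_prop[OF B] by (auto simp: X_def)
  have Y: "Y \<in> Pow {..<n}" "(\<Sum>i\<in>Y. b i) = y" using Xof_prop[OF B] by (auto simp: Y_def)
  have fin: "finite X" "finite Y" using X Y finite_subset by auto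
  have "(\<Sum>i\<in>(X-Y) \<union> (Y-X). b i) = x + y" using sum_symdiff[OF fin, of b] X Y by simp
  moreover have "(X-Y) \<union> (Y-X) \<in> Pow {..<n}" using X Y by auto
  ultimately have "Xof b (x + y) = (X-Y) \<union> (Y-X)" using Xof_sum[OF B] by metis
  thus "crd b i (x + y) = crd b i x + crd b i y"
    unfolding crd_def X_def[symmetric] Y_def[symmetric] by auto
qed

lemma crd_bit: "bit (crd b i x)" by (simp add: crd_def bit_def)

lemma prod_ind: "finite M \<Longrightarrow> (\<Prod>i\<in>M. if i \<in> X then (1::'a) else 0) = (if M \<subseteq> X then 1 else 0)"
  by (induction M rule: finite_induct) auto

lemma anf_eval:
  assumes B: "F2_basis n b UNIV" and A: "anf_rep n b f S"
  shows "f x = (\<Sum>M\<in>S. \<Prod>i\<in>M. crd b i x)"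
proof -
  define X where "X = Xof b x"
  have X: "X \<in> Pow {..<n}" "(\<Sum>i\<in>X. b i) = x" using Xof_prop[OF B] by (auto simp: X_def)
  have fS: "finite S" using anf_fin[OF A] .
  have Sfin: "finite M" if "M \<in> S" for M using A that finite_subset by (auto simp: anf_rep_def)
  have "f x = of_nat (card {M\<in>S. M \<subseteq> X})" using A X by (auto simp: anf_rep_def)
  also have "\<dots> = (\<Sum>M\<in>S. if M \<subseteq> X then 1 else 0)" using of_nat_card_filter[OF fS] by simp
  also have "\<dots> = (\<Sum>M\<in>S. \<Prod>i\<in>M. crd b i x)"
    by (intro sum.cong refl) (simp add: crd_def X_def[symmetric] prod_ind Sfin)
  finally show ?thesis .
qed

lemma rdeg_ge: "finite S \<Longrightarrow> M \<in> S \<Longrightarrow> card M \<le> rdeg S"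
  by (auto simp: rdeg_def)

lemma anf_dl:
  assumes B: "F2_basis n b UNIV" and A: "anf_rep n b f S"
  shows "dl (rdeg S) f"
proof -
  have fS: "finite S" using anf_fin[OF A] .
  have "dl (rdeg S) (\<lambda>x. \<Sum>M\<in>S. \<Prod>i\<in>M. crd b i x)"
  proof (rule dl_sum)
    fix M assume M: "M \<in> S"
    hence "finite M" using A finite_subset by (auto simp: anf_rep_def)
    hence "dl (card M) (\<lambda>x. \<Prod>i\<in>M. crd b i x)" using crd_additive[OF B] by (intro dl_prod_add)
    thus "dl (rdeg S) (\<lambda>x. \<Prod>i\<in>M. crd b i x)" using rdeg_ge[OF fS M] by (rule dl_mono_le)
  qed
  moreover have "f = (\<lambda>x. \<Sum>M\<in>S. \<Prod>i\<in>M. crd b i x)" using anf_eval[OF B A] by (rule ext)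
  ultimately show ?thesis by simp
qed

lemma anf_upper:
  assumes B: "F2_basis n b UNIV" and A: "anf_rep n b f S" and D: "dl m f"
  shows "rdeg S \<le> m"
proof -
  have fS: "finite S" using anf_fin[OF A] .
  have "card M \<le> m" if M: "M \<in> S" for M
  proof (rule ccontr)
    assume "\<not> card M \<le> m"
    hence lt: "m < card M" by simp
    have MP: "M \<in> Pow {..<n}" using A M by (auto simp: anf_rep_def)
    hence fM: "finite M" using finite_subset by auto
    have "Delta f M b 0 = (\<Sum>Y\<in>Pow M. f (\<Sum>i\<in>Y. b i))" by (simp add: Delta_def)
    also have "\<dots> = 1" using anf_mobius[OF A MP] M by simp
    finally show False using dl_Delta[OF fM D lt, of b 0] by simp
  qed
  thus ?thesis using fS by (auto simp: rdeg_def)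
qed

lemma anf_lower:
  assumes B: "F2_basis n b UNIV" and A: "anf_rep n b f S" and fA: "finite A"
    and ne: "Delta f A a x \<noteq> 0"
  shows "card A \<le> rdeg S"
  using dl_Delta[OF fA anf_dl[OF B A]] ne by (meson not_le)

lemma bad_props:
  fixes f :: "'a \<Rightarrow> 'a"
  assumes bits: "\<And>x. bit (f x)"
  shows "\<exists>b S. F2_basis n b UNIV \<and> anf_rep n b f S \<and> bool_alg_degree n f = rdeg S"
proof -
  define b0 where "b0 = (SOME b. F2_basis n b (UNIV::'a set))"
  have B: "F2_basis n b0 UNIV" unfolding b0_def using UNIV_basis by (rule someI_ex)
  have "\<exists>S. anf_rep n b0 f S" by (rule anf_exists[of f n b0, OF bits])
  then obtain S where S: "anf_rep n b0 f S" by (elim exE)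
  have "(THE S. anf_rep n b0 f S) = S"
    by (rule the_equality[where P="\<lambda>S. anf_rep n b0 f S", OF S]) (rule anf_unique[OF _ S])
  hence "bool_alg_degree n f = rdeg S" by (simp add: bool_alg_degree_def b0_def[symmetric] Let_def)
  thus ?thesis using B S by blast
qed

lemma bad_upper: "(\<And>x. bit (f x::'a)) \<Longrightarrow> dl m f \<Longrightarrow> bool_alg_degree n f \<le> m"
  using bad_props anf_upper by metis

lemma bad_lower: "(\<And>x. bit (f x::'a)) \<Longrightarrow> finite A \<Longrightarrow> Delta f A a x \<noteq> 0 \<Longrightarrow> card A \<le> bool_alg_degree n f"
  using bad_props anf_lower by metis

end

context GF begin

definition Xk :: "(nat \<Rightarrow> 'a) \<Rightarrow> 'a \<Rightarrow> nat set" where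
  "Xk c y = (THE X. X \<subseteq> {..<k} \<and> (\<Sum>i\<in>X. c i) = y)"

lemma coord_Xk: "coord k c j y = (if j \<in> Xk c y then 1 else 0)"
  by (simp add: coord_def Xk_def)

lemma Xk_prop:
  assumes C: "F2_basis k c (subfield k :: 'a set)" and y: "y \<in> subfield k"
  shows "Xk c y \<subseteq> {..<k} \<and> (\<Sum>i\<in>Xk c y. c i) = y"
proof -
  have bij: "bij_betw (\<lambda>X. \<Sum>i\<in>X. c i) (Pow {..<k}) (subfield k)" using C by (simp add: F2_basis_def)
  have "\<exists>!X. X \<subseteq> {..<k} \<and> (\<Sum>i\<in>X. c i) = y"
  proof -
    have "y \<in> (\<lambda>X. \<Sum>i\<in>X. c i) ` Pow {..<k}" using bij y by (simp add: bij_betw_def)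
    then obtain X where X: "X \<in> Pow {..<k}" "(\<Sum>i\<in>X. c i) = y" by (metis imageE)
    moreover have "Y = X" if "Y \<subseteq> {..<k}" "(\<Sum>i\<in>Y. c i) = y" for Y
      using bij that X unfolding bij_betw_def by (auto dest: inj_onD)
    ultimately show ?thesis by blast
  qed
  thus ?thesis unfolding Xk_def by (rule theI')
qed

lemma Xk_sum:
  assumes C: "F2_basis k c (subfield k :: 'a set)" and X: "X \<subseteq> {..<k}"
  shows "Xk c (\<Sum>i\<in>X. c i) = X"
proof -
  have bij: "bij_betw (\<lambda>X. \<Sum>i\<in>X. c i) (Pow {..<k}) (subfield k)" using C by (simp add: F2_basis_def)
  have yk: "(\<Sum>i\<in>X. c i) \<in> subfield k" using bij X unfolding bij_betw_def by auto
  show ?thesis using Xk_prop[OF C yk] bij X unfolding bij_betw_def by (auto dest: inj_onD)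
qed

lemma basis_in: "F2_basis k c (subfield k :: 'a set) \<Longrightarrow> j < k \<Longrightarrow> c j \<in> subfield k"
proof -
  assume C: "F2_basis k c (subfield k :: 'a set)" and j: "j < k"
  have "(\<lambda>X. \<Sum>i\<in>X. c i) ` Pow {..<k} = subfield k" using C by (simp add: F2_basis_def bij_betw_def)
  moreover have "{j} \<in> Pow {..<k}" using j by simp
  ultimately have "(\<Sum>i\<in>{j}. c i) \<in> subfield k" by blast
  thus ?thesis by simp
qed

lemma coord_add:
  assumes C: "F2_basis k c (subfield k :: 'a set)" and y: "y \<in> subfield k" "y' \<in> subfield k"
  shows "coord k c j (y + y') = coord k c j y + coord k c j y'"
proof -
  define X where "X = Xk c y"
  define Y where "Y = Xk c y'"
  have X: "X \<subseteq> {..<k}" "(\<Sum>i\<in>X. c i) = y" using Xk_prop[OF C y(1)] by (auto simp: X_def)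
  have Y: "Y \<subseteq> {..<k}" "(\<Sum>i\<in>Y. c i) = y'" using Xk_prop[OF C y(2)] by (auto simp: Y_def)
  have fin: "finite X" "finite Y" using X Y finite_subset by auto
  have "(\<Sum>i\<in>(X-Y) \<union> (Y-X). c i) = y + y'" using sum_symdiff[OF fin, of c] X Y by simp
  moreover have "(X-Y) \<union> (Y-X) \<subseteq> {..<k}" using X Y by auto
  ultimately have "Xk c (y + y') = (X-Y) \<union> (Y-X)" using Xk_sum[OF C] by metis
  thus ?thesis unfolding coord_Xk X_def[symmetric] Y_def[symmetric] by auto
qed

lemma coord_bit: "bit (coord k c j (y::'a))" by (simp add: coord_def bit_def)

lemma coord_zero: "F2_basis k c (subfield k :: 'a set) \<Longrightarrow> coord k c j 0 = 0"
  using Xk_sum[of c "{}"] by (simp add: coord_Xk)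

lemma coord_cj: "F2_basis k c (subfield k :: 'a set) \<Longrightarrow> j < k \<Longrightarrow> coord k c j (c j) = 1"
  using Xk_sum[of c "{j}"] by (simp add: coord_Xk)

lemma coord_one: "F2_basis k c (subfield k :: 'a set) \<Longrightarrow> \<exists>j<k. coord k c j 1 = 1"
proof -
  assume C: "F2_basis k c (subfield k :: 'a set)"
  have X: "Xk c 1 \<subseteq> {..<k}" "(\<Sum>i\<in>Xk c 1. c i) = 1" using Xk_prop[OF C] by auto
  hence "Xk c 1 \<noteq> {}" by auto
  then obtain j where "j \<in> Xk c 1" by blast
  thus ?thesis using X by (auto simp: coord_Xk)
qed

lemma coord_sum:
  assumes C: "F2_basis k c (subfield k :: 'a set)"
  shows "(\<And>i. i \<in> I \<Longrightarrow> y i \<in> subfield k) \<Longrightarrow> coord k c j (\<Sum>i\<in>I. y i) = (\<Sum>i\<in>I. coord k c j (y i))"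
proof (induction I rule: infinite_finite_induct)
  case (infinite A) thus ?case using coord_zero[OF C] by simp
next
  case empty thus ?case using coord_zero[OF C] by simp
next
  case (insert a A)
  have "(\<Sum>i\<in>A. y i) \<in> subfield k" using insert by (intro sum_in_V) (auto intro: sub_add)
  thus ?case using insert coord_add[OF C] by simp
qed

lemma coord_bitmul:
  "F2_basis k c (subfield k :: 'a set) \<Longrightarrow> bit \<beta> \<Longrightarrow> coord k c j (\<beta> * y) = \<beta> * coord k c j y"
  using coord_zero by (auto simp: bit_def)

lemma trace4_zero: "trace4 k (0::'a) = 0" by (simp add: trace4_def power_0_left)

lemma trace4_sumI: "trace4 k (\<Sum>i\<in>I. (f i::'a)) = (\<Sum>i\<in>I. trace4 k (f i))"
  by (induction I rule: infinite_finite_induct) (simp_all add: trace4_add trace4_zero)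

lemma trace4_bitmul: "bit \<beta> \<Longrightarrow> trace4 k (\<beta> * (z::'a)) = \<beta> * trace4 k z"
  by (auto simp: bit_def trace4_def power_0_left)

lemma trace4_scal: "l \<in> subfield k \<Longrightarrow> trace4 k (l * (z::'a)) = l * trace4 k z"
proof -
  assume l: "l \<in> subfield k"
  have l2: "l^(2^(2*k)) = l" using sub_pow[OF l, of 2] by (simp add: mult.commute)
  have l3: "l^(2^(3*k)) = l" using sub_pow[OF l, of 3] by (simp add: mult.commute)
  have l1: "l^(2^k) = l" using l by (simp add: subfield_def)
  show ?thesis by (simp only: trace4_def power_mult_distrib l1 l2 l3 distrib_left)
qed

lemma basis_expand:
  assumes B: "F2_basis n b UNIV"
  shows "x = (\<Sum>i<n. crd b i x * b i)"
proof -
  have X: "Xof b x \<in> Pow {..<n}" "(\<Sum>i\<in>Xof b x. b i) = x" using Xof_prop[OF B] by auto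
  have "(\<Sum>i<n. crd b i x * b i) = (\<Sum>i<n. if i \<in> Xof b x then b i else 0)"
    by (intro sum.cong refl) (simp add: crd_def)
  also have "\<dots> = (\<Sum>i\<in>Xof b x. b i)" using X(1) by (simp add: sum.If_cases Int_absorb1)
  finally show ?thesis using X by simp
qed

lemma dl_quad:
  assumes C: "F2_basis k c (subfield k :: 'a set)"
  shows "dl 2 (\<lambda>x. coord k c j (trace4 k (\<omega> * x^(q+1))))"
proof -
  obtain b where B: "F2_basis n b (UNIV::'a set)" using UNIV_basis by blast
  define \<beta> where "\<beta> i x = crd b i x" for i x
  have bb: "bit (\<beta> i x)" for i x by (simp add: \<beta>_def crd_bit)
  have ad: "additive (\<beta> i)" for i unfolding \<beta>_def by (rule crd_additive[OF B])
  define T where "T i l = trace4 k (\<omega> * (b i^q * b l))" for i l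
  have Tk: "T i l \<in> subfield k" for i l by (simp add: T_def trace4_sub)
  have eq: "coord k c j (trace4 k (\<omega> * x^(q+1))) = (\<Sum>i<n. \<Sum>l<n. \<beta> i x * (\<beta> l x * coord k c j (T i l)))" for x
  proof -
    have x: "x = (\<Sum>i<n. \<beta> i x * b i)" using basis_expand[OF B] by (simp add: \<beta>_def)
    have xq: "x^q = (\<Sum>i<n. \<beta> i x * b i^q)"
    proof -
      have "x^q = (\<Sum>i<n. (\<beta> i x * b i)^q)" using frob_sum[of "\<lambda>i. \<beta> i x * b i" "{..<n}" k] x by simp
      also have "\<dots> = (\<Sum>i<n. \<beta> i x * b i^q)" using bb by (simp add: power_mult_distrib bit_pow)
      finally show ?thesis .
    qed
    have "x^(q+1) = x^q * x" by simp
    also have "\<dots> = (\<Sum>i<n. \<beta> i x * b i^q) * (\<Sum>l<n. \<beta> l x * b l)"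
      using xq x by simp
    also have "\<dots> = (\<Sum>i<n. \<Sum>l<n. (\<beta> i x * b i^q) * (\<beta> l x * b l))" by (rule sum_product)
    also have "\<dots> = (\<Sum>i<n. \<Sum>l<n. (\<beta> i x * \<beta> l x) * (b i^q * b l))"
      by (simp only: ac_simps)
    finally have "\<omega> * x^(q+1) = (\<Sum>i<n. \<Sum>l<n. (\<beta> i x * \<beta> l x) * (\<omega> * (b i^q * b l)))"
      by (simp add: sum_distrib_left algebra_simps)
    hence "trace4 k (\<omega> * x^(q+1)) = (\<Sum>i<n. \<Sum>l<n. (\<beta> i x * \<beta> l x) * T i l)"
      using bb by (simp add: trace4_sumI trace4_bitmul bit_mult T_def)
    hence "coord k c j (trace4 k (\<omega> * x^(q+1))) = (\<Sum>i<n. \<Sum>l<n. coord k c j ((\<beta> i x * \<beta> l x) * T i l))"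
    proof -
      have bk: "\<beta> i x * \<beta> l x \<in> subfield k" for i l using bb[of i x] bb[of l x] by (auto simp: bit_def)
      have mem: "\<beta> i x * \<beta> l x * T i l \<in> subfield k" for i l using bk Tk by (rule sub_mult)
      have mem2: "(\<Sum>l<n. \<beta> i x * \<beta> l x * T i l) \<in> subfield k" for i
        using mem by (intro sum_in_V) (auto intro: sub_add)
      have "coord k c j (\<Sum>i<n. \<Sum>l<n. \<beta> i x * \<beta> l x * T i l)
          = (\<Sum>i<n. coord k c j (\<Sum>l<n. \<beta> i x * \<beta> l x * T i l))"
        using mem2 by (rule coord_sum[OF C])
      also have "\<dots> = (\<Sum>i<n. \<Sum>l<n. coord k c j (\<beta> i x * \<beta> l x * T i l))"
        using mem by (intro sum.cong refl coord_sum[OF C])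
      finally show ?thesis using \<open>trace4 k (\<omega> * x^(q+1)) = _\<close> by simp
    qed
    also have "\<dots> = (\<Sum>i<n. \<Sum>l<n. \<beta> i x * (\<beta> l x * coord k c j (T i l)))"
      using bb by (simp add: coord_bitmul[OF C] bit_mult mult.assoc)
    finally show ?thesis .
  qed
  have "dl 2 (\<lambda>x. \<Sum>i<n. \<Sum>l<n. \<beta> i x * (\<beta> l x * coord k c j (T i l)))"
    by (intro dl_sum) (simp add: numeral_2_eq_2 dl_mul ad dl_const)
  thus ?thesis using eq by simp
qed

end

context GF begin

lemma surj_lin:
  assumes fJ: "finite J" and ind: "\<forall>A\<subseteq>J. A \<noteq> {} \<longrightarrow> (\<Sum>i\<in>A. v i) \<noteq> (0::'a)"
    and y: "\<forall>i\<in>J. bit (y i)"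
  shows "\<exists>x. \<forall>i\<in>J. trace n (v i * x) = y i"
proof -
  define P where "P x = (\<Prod>i\<in>J. (chi (trace n (v i * x) + y i) + 1))" for x
  have prodA: "(\<Prod>i\<in>A. chi (trace n (v i * x) + y i)) = chi (\<Sum>i\<in>A. y i) * chi (trace n ((\<Sum>i\<in>A. v i) * x))"
    if "A \<subseteq> J" for A x
  proof -
    have "(\<Prod>i\<in>A. chi (trace n (v i * x) + y i)) = (\<Prod>i\<in>A. chi (y i) * chi (trace n (v i * x)))"
    proof (rule prod.cong[OF refl])
      fix i assume "i \<in> A"
      hence "bit (y i)" using y that by auto
      thus "chi (trace n (v i * x) + y i) = chi (y i) * chi (trace n (v i * x))"
        using chi_add[OF bit_trace] by (simp add: mult.commute)
    qed
    also have "\<dots> = (\<Prod>i\<in>A. chi (y i)) * (\<Prod>i\<in>A. chi (trace n (v i * x)))" by (rule prod.distrib)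
    also have "(\<Prod>i\<in>A. chi (y i)) = chi (\<Sum>i\<in>A. y i)" using y that by (intro chi_sum_bits[symmetric]) auto
    also have "(\<Prod>i\<in>A. chi (trace n (v i * x))) = chi (\<Sum>i\<in>A. trace n (v i * x))"
      by (intro chi_sum_bits[symmetric] bit_trace)
    also have "(\<Sum>i\<in>A. trace n (v i * x)) = trace n ((\<Sum>i\<in>A. v i) * x)"
      by (simp add: trace_sum sum_distrib_right)
    finally show ?thesis .
  qed
  have "(\<Sum>x\<in>UNIV. P x) = (\<Sum>x\<in>UNIV. \<Sum>A\<in>Pow J. chi (\<Sum>i\<in>A. y i) * chi (trace n ((\<Sum>i\<in>A. v i) * x)))"
  proof (rule sum.cong[OF refl])
    fix x
    have "P x = (\<Sum>A\<in>Pow J. (\<Prod>i\<in>A. chi (trace n (v i * x) + y i)) * (\<Prod>i\<in>J-A. 1))"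
      unfolding P_def by (rule prod_add[OF fJ])
    also have "\<dots> = (\<Sum>A\<in>Pow J. chi (\<Sum>i\<in>A. y i) * chi (trace n ((\<Sum>i\<in>A. v i) * x)))"
      by (intro sum.cong refl) (simp add: prodA)
    finally show "P x = (\<Sum>A\<in>Pow J. chi (\<Sum>i\<in>A. y i) * chi (trace n ((\<Sum>i\<in>A. v i) * x)))" .
  qed
  also have "\<dots> = (\<Sum>A\<in>Pow J. chi (\<Sum>i\<in>A. y i) * (\<Sum>x\<in>UNIV. chi (trace n ((\<Sum>i\<in>A. v i) * x))))"
    by (subst sum.swap) (simp add: sum_distrib_left)
  also have "\<dots> = (\<Sum>A\<in>Pow J. if A = {} then 2^n else 0)"
  proof (intro sum.cong refl)
    fix A assume A: "A \<in> Pow J"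
    show "chi (\<Sum>i\<in>A. y i) * (\<Sum>x\<in>UNIV. chi (trace n ((\<Sum>i\<in>A. v i) * x))) = (if A = {} then 2^n else 0)"
    proof (cases "A = {}")
      case True thus ?thesis by (simp add: cardA)
    next
      case False
      hence "(\<Sum>i\<in>A. v i) \<noteq> 0" using ind A by auto
      thus ?thesis using balanced False by simp
    qed
  qed
  also have "\<dots> = 2^n" using fJ by (simp add: sum.delta')
  finally have "(\<Sum>x\<in>UNIV. P x) \<noteq> 0" by simp
  then obtain x where "P x \<noteq> 0" by (meson sum.neutral)
  hence "\<forall>i\<in>J. chi (trace n (v i * x) + y i) + 1 \<noteq> 0" unfolding P_def using fJ by simp
  hence "\<forall>i\<in>J. trace n (v i * x) + y i = 0" by (auto simp: chi_def split: if_splits)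
  thus ?thesis by (auto simp: add_eq0_iff)
qed

lemma Delta_two: "Delta f {0,1} a x = f (x + a 1 + a 0) + f (x + a 1) + (f (x + a 0) + f x)"
proof -
  have "Delta f (insert 0 {1}) a x = Delta (\<lambda>z. f (z + a 0) + f z) {1} a x"
    by (rule Delta_insert) auto
  also have "\<dots> = Delta (\<lambda>z. f (z + a 1 + a 0) + f (z + a 1) + (f (z + a 0) + f z)) {} a x"
    by (subst Delta_insert) auto
  also have "\<dots> = f (x + a 1 + a 0) + f (x + a 1) + (f (x + a 0) + f x)" by (simp add: Delta_def)
  finally show ?thesis by simp
qed

lemma tr_shift: "trace n (\<mu> * x^q * e) = trace n (\<mu>^(2^(3*k)) * e^(2^(3*k)) * (x::'a))"
proof -
  have "trace n (\<mu> * x^q * e) = trace n ((\<mu> * x^q * e)^(2^(3*k)))" by (simp add: trace_frob)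
  also have "(\<mu> * x^q * e)^(2^(3*k)) = \<mu>^(2^(3*k)) * e^(2^(3*k)) * (x^(2^k))^(2^(3*k))"
    by (simp add: power_mult_distrib)
  also have "(x^(2^k))^(2^(3*k)) = x" using pow2_pow2[of x k "3*k"] fermat[of x] by simp
  finally show ?thesis by simp
qed

lemma quad_exists:
  assumes C: "F2_basis k c (subfield k :: 'a set)" and j0: "j0 < k"
    and w: "\<omega> \<in> subfield (2*k)" "\<omega>^(q+1) = 1" "\<omega> \<noteq> (1::'a)" and e: "e \<noteq> 0"
  shows "\<exists>a. coord k c j0 (trace4 k (\<omega> * (a^q * e + e^q * a))) = 1"
proof -
  define \<Phi> where "\<Phi> a = trace4 k (\<omega> * (a^q * e + e^q * a))" for a
  have "\<exists>a1. \<Phi> a1 \<noteq> 0"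
  proof (rule ccontr)
    assume "\<not> ?thesis"
    hence P0: "\<Phi> a = 0" for a by simp
    have "trace n (Lm \<omega> e * a) = 0" for a
    proof -
      have "trace n (Lm \<omega> e * a) = trace n (\<omega>^(2^(3*k)) * e^(2^(3*k)) * a) + trace n (\<omega> * e^q * a)"
        by (simp add: Lm_def distrib_right trace_add)
      also have "\<dots> = trace n (\<omega> * a^q * e) + trace n (\<omega> * e^q * a)"
        by (simp only: tr_shift)
      also have "\<dots> = trace n (\<omega> * (a^q * e + e^q * a))"
        by (simp only: distrib_left trace_add mult.assoc)
      also have "\<dots> = trace k (1 * \<Phi> a)" by (simp only: \<Phi>_def trace_k_trace4[OF sub_1]) simp
      finally show ?thesis using P0 by (simp add: trace_def power_0_left)
    qed
    hence tz: "\<forall>a. trace n (Lm \<omega> e * a) = 0" by blast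
    have "Lm \<omega> e = 0"
    proof (rule ccontr)
      assume "Lm \<omega> e \<noteq> 0"
      then obtain a where "trace n (Lm \<omega> e * a) = 1" using trace_exists_one by blast
      thus False using tz by simp
    qed
    moreover have "\<omega> \<noteq> 0" using w by auto
    moreover have "\<omega>^((q-1)*(q^2+1)) \<noteq> 1" using mu_cond[OF sub_1 _ w(2,3)] by simp
    ultimately show False using L_inj e by blast
  qed
  then obtain a1 where a1: "\<Phi> a1 \<noteq> 0" by blast
  have yk: "\<Phi> a1 \<in> subfield k" by (simp add: \<Phi>_def trace4_sub)
  define l where "l = c j0 / \<Phi> a1"
  have lk: "l \<in> subfield k" unfolding l_def by (intro sub_div basis_in[OF C j0] yk)
  have "\<Phi> (l * a1) = l * \<Phi> a1"
  proof -
    have "(l * a1)^q = l * a1^q" using q_pow[OF lk] by (simp add: power_mult_distrib)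
    hence "\<omega> * ((l * a1)^q * e + e^q * (l * a1)) = l * (\<omega> * (a1^q * e + e^q * a1))"
      by (simp add: algebra_simps)
    hence "\<Phi> (l * a1) = trace4 k (l * (\<omega> * (a1^q * e + e^q * a1)))" by (simp only: \<Phi>_def)
    thus ?thesis by (simp only: trace4_scal[OF lk] \<Phi>_def)
  qed
  also have "\<dots> = c j0" using a1 by (simp add: l_def)
  finally have "coord k c j0 (\<Phi> (l * a1)) = 1" using coord_cj[OF C j0] by simp
  thus ?thesis unfolding \<Phi>_def by blast
qed

end

context GF begin

lemma deg_part:
  fixes u :: "nat \<Rightarrow> 'a" and \<omega> :: 'a and S :: "nat set set" and \<iota> :: "nat \<Rightarrow> nat" and H :: "'a \<Rightarrow> 'a"
  assumes tau: "1 \<le> \<tau>" "\<tau> \<le> k"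
    and u_nz: "\<forall>i\<in>{1..k}. u i \<in> subfield (2 * k) \<and> u i \<noteq> 0"
    and u_rel: "\<forall>i j. 1 \<le> i \<and> i < j \<and> j \<le> k \<longrightarrow>
                   u i * u j ^ (2 ^ k) \<in> subfield k \<and> u i * u j ^ (2 ^ k) \<noteq> 0"
    and F: "S \<subseteq> Pow {1..\<tau>}" "rdeg S = d"
    and gen: "\<omega> \<in> unit_circle k" "unit_circle k \<subseteq> range (\<lambda>m::nat. \<omega> ^ m)"
    and idx: "inj_on \<iota> {1..\<tau>}" "\<iota> ` {1..\<tau>} \<subseteq> {1..k}"
    and H: "H = (\<lambda>x. trace4 k (\<omega> * x ^ (2 ^ k + 1))
                     + eval_rpoly S (\<lambda>j. trace (4 * k) (u (\<iota> j) * x)))"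
    and lin: "lin_indep_F2 u {1..k}" and d2: "2 \<le> d"
  shows "vec_alg_degree (4 * k) k H = d"
proof -
  define c where "c = (SOME c. F2_basis k c (subfield k :: 'a set))"
  have C: "F2_basis k c (subfield k :: 'a set)" unfolding c_def using Fq_basis by (rule someI_ex)
  define J where "J = {1..\<tau>}"
  define v where "v j = u (\<iota> j)" for j
  define G where "G x = eval_rpoly S (\<lambda>j. trace n (v j * x))" for x
  define A where "A x = trace4 k (\<omega> * x^(q+1))" for x
  define g where "g j x = coord k c j (H x)" for j x
  have w: "\<omega> \<in> subfield (2*k)" "\<omega>^(q+1) = 1" using gen(1) by (auto simp: unit_circle_def)
  have w1: "\<omega> \<noteq> 1" using omega_ne1[OF gen] .
  have fS: "finite S" using F(1) by (meson finite_Pow_iff finite_atLeastAtMost finite_subset)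
  have inJ: "j \<in> J" if "M \<in> S" "j \<in> M" for M j using F(1) that unfolding J_def by blast
  have finM: "finite M" if "M \<in> S" for M
    using F(1) that by (meson PowD finite_atLeastAtMost finite_subset subsetD)
  have bG: "bit (G x)" for x unfolding G_def by (intro bit_rpoly bit_trace)
  have Gk: "G x \<in> subfield k" for x using bG[of x] by (auto simp: bit_def)
  have HAG: "H x = A x + G x" for x by (simp add: H A_def G_def v_def)
  have geq: "g j x = coord k c j (A x) + G x * coord k c j 1" for j x
  proof -
    have "g j x = coord k c j (A x) + coord k c j (G x)"
      unfolding g_def HAG by (rule coord_add[OF C]) (simp_all add: A_def trace4_sub Gk)
    also have "coord k c j (G x) = G x * coord k c j 1"
      using coord_bitmul[OF C bG[of x], of j 1] by simp
    finally show ?thesis .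
  qed
  have bg: "bit (g j x)" for j x by (simp add: g_def coord_bit)
  have dlG: "dl d G"
  proof -
    have "dl d (\<lambda>x. \<Sum>M\<in>S. \<Prod>j\<in>M. trace n (v j * x))"
    proof (rule dl_sum)
      fix M assume M: "M \<in> S"
      hence fM: "finite M" by (rule finM)
      have "dl (card M) (\<lambda>x. \<Prod>j\<in>M. trace n (v j * x))"
        using fM by (rule dl_prod_add) (simp add: additive_def distrib_left trace_add)
      moreover have "card M \<le> d" using rdeg_ge[OF fS M] F(2) by simp
      ultimately show "dl d (\<lambda>x. \<Prod>j\<in>M. trace n (v j * x))" by (rule dl_mono_le)
    qed
    moreover have "G = (\<lambda>x. \<Sum>M\<in>S. \<Prod>j\<in>M. trace n (v j * x))"
      by (rule ext) (simp add: G_def eval_rpoly_def)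
    ultimately show ?thesis by simp
  qed
  have dlg: "dl d (g j)" for j
  proof -
    have "dl d (\<lambda>x. coord k c j (A x) + coord k c j 1 * G x)"
    proof (rule dl_add)
      show "dl d (\<lambda>x. coord k c j (A x))"
        using dl_mono_le[OF dl_quad[OF C, of j \<omega>] d2] by (simp add: A_def)
      show "dl d (\<lambda>x. coord k c j 1 * G x)" using dlG by (rule dl_scale)
    qed
    moreover have "g j = (\<lambda>x. coord k c j (A x) + coord k c j 1 * G x)"
      by (rule ext) (simp add: geq mult.commute)
    ultimately show ?thesis by simp
  qed
  have upper: "bool_alg_degree n (g j) \<le> d" for j by (rule bad_upper[OF bg dlg])
  obtain j0 where j0: "j0 < k" "coord k c j0 1 = 1" using coord_one[OF C] by blast
  define A' where "A' x = coord k c j0 (A x)" for x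
  have gj0: "g j0 = (\<lambda>x. A' x + G x)" by (rule ext) (simp add: geq j0 A'_def)
  have dlA': "dl 2 A'"
  proof -
    have "A' = (\<lambda>x. coord k c j0 (trace4 k (\<omega> * x^(q+1))))" by (rule ext) (simp only: A'_def A_def)
    thus ?thesis using dl_quad[OF C, of j0 \<omega>] by (simp only:)
  qed
  have vU: "\<exists>t\<in>subfield k. v j = u 1 * t" if "j \<in> J" for j
  proof -
    have "j \<in> {1..\<tau>}" using that by (simp add: J_def)
    hence "\<iota> j \<in> {1..k}" using idx(2) by blast
    thus ?thesis using u_in_U0[OF u_nz u_rel] by (simp add: v_def)
  qed
  have lower: "d \<le> bool_alg_degree n (g j0)"
  proof (cases "d = 2")
    case True
    define e where "e = u 1 ^ q"
    have u1: "u 1 \<in> subfield (2*k)" "u 1 \<noteq> 0" using u_nz k2 by auto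
    have e0: "e \<noteq> 0" using u1 by (simp add: e_def)
    have tre: "trace n (v j * e) = 0" if jJ: "j \<in> J" for j
    proof -
      obtain t where t: "t \<in> subfield k" "v j = u 1 * t" using vU[OF jJ] by blast
      have "v j * e = u 1 ^ (q+1) * t" using t by (simp add: e_def power_add algebra_simps)
      moreover have "u 1 ^ (q+1) * t \<in> subfield k" using norm_sub[OF u1(1)] t(1) by (rule sub_mult)
      ultimately show ?thesis using trace_n_sub_k by simp
    qed
    have Ge: "G (z + e) = G z" for z
      unfolding G_def eval_rpoly_def
    proof (intro sum.cong prod.cong refl)
      fix M j assume "M \<in> S" "j \<in> M"
      hence "j \<in> J" by (rule inJ)
      thus "trace n (v j * (z + e)) = trace n (v j * z)" using tre by (simp add: distrib_left trace_add)
    qed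
    obtain a where a: "coord k c j0 (trace4 k (\<omega> * (a^q * e + e^q * a))) = 1"
      using quad_exists[OF C j0(1) w w1 e0] by blast
    define a' where "a' i = (if i = 0 then e else a)" for i :: nat
    have "Delta (g j0) {0,1} a' 0 = g j0 (a + e) + g j0 a + (g j0 e + g j0 0)"
      using Delta_two[of "g j0" a' 0] by (simp add: a'_def)
    also have "\<dots> = (A' (a + e) + A' a + A' e + A' 0) + (G (a + e) + G a + G (0 + e) + G 0)"
      by (simp add: gj0 ac_simps)
    also have "G (a + e) + G a + G (0 + e) + G 0 = 0" by (simp only: Ge) simp
    also have "A' (a + e) + A' a + A' e + A' 0 = coord k c j0 (A (a + e) + A a + A e + A 0)"
      unfolding A'_def by (simp add: coord_add[OF C] A_def trace4_sub sub_add)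
    also have "A (a + e) + A a + A e + A 0 = trace4 k (\<omega> * (a^q * e + e^q * a))"
    proof -
      have "(a + e)^(q+1) = a^(q+1) + a^q * e + e^q * a + e^(q+1)"
        by (simp add: power_Suc2 frob algebra_simps del: power_Suc)
      hence "(a + e)^(q+1) + a^(q+1) + e^(q+1) + 0^(q+1) = a^q * e + e^q * a"
        by (simp add: algebra_simps)
      hence "\<omega> * (a + e)^(q+1) + \<omega> * a^(q+1) + \<omega> * e^(q+1) + \<omega> * 0^(q+1) = \<omega> * (a^q * e + e^q * a)"
        by (metis distrib_left)
      thus ?thesis by (simp only: A_def trace4_add[symmetric])
    qed
    finally have D1: "Delta (g j0) {0,1} a' 0 = 1" using a by simp
    have "card {0::nat,1} \<le> bool_alg_degree n (g j0)"
      using bad_lower[where A="{0::nat,1}" and a=a' and x=0, OF bg] D1 by simp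
    thus ?thesis using True by simp
  next
    case False
    hence d3: "3 \<le> d" using d2 by simp
    have Sne: "S \<noteq> {}" using F(2) d2 by (auto simp: rdeg_def)
    have "d \<in> card ` S" using F(2) Sne fS by (auto simp: rdeg_def intro: Max_in)
    then obtain M0 where M0: "M0 \<in> S" "card M0 = d" by blast
    have M0J: "M0 \<subseteq> J" using M0 inJ by blast
    have fM0: "finite M0" using M0(1) by (rule finM)
    have ind: "\<forall>B\<subseteq>J. B \<noteq> {} \<longrightarrow> (\<Sum>i\<in>B. v i) \<noteq> 0"
    proof (intro allI impI)
      fix B assume B: "B \<subseteq> J" "B \<noteq> {}"
      have "inj_on \<iota> B" using idx(1) B(1) by (auto simp: J_def intro: inj_on_subset)
      hence "(\<Sum>i\<in>B. v i) = (\<Sum>i\<in>\<iota> ` B. u i)" by (simp add: sum.reindex v_def)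
      moreover have "\<iota> ` B \<subseteq> {1..k}" using idx(2) B(1) by (auto simp: J_def)
      moreover have "\<iota> ` B \<noteq> {}" using B by simp
      ultimately show "(\<Sum>i\<in>B. v i) \<noteq> 0" using lin by (auto simp: lin_indep_F2_def)
    qed
    define a where "a m = (SOME x. \<forall>i\<in>J. trace n (v i * x) = (if i = m then 1 else 0))" for m
    have a: "trace n (v i * a m) = (if i = m then 1 else 0)" if "i \<in> J" for i m
    proof -
      have "\<exists>x. \<forall>i\<in>J. trace n (v i * x) = (if i = m then 1 else 0)"
        by (rule surj_lin) (auto simp: J_def ind[unfolded J_def])
      hence "\<forall>i\<in>J. trace n (v i * a m) = (if i = m then 1 else 0)" unfolding a_def by (rule someI_ex)
      thus ?thesis using that by blast
    qed
    have GY: "G (0 + (\<Sum>m\<in>Y. a m)) = of_nat (card {M\<in>S. M \<subseteq> Y})" if Y: "Y \<in> Pow M0" for Y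
    proof -
      have fY: "finite Y" using Y fM0 by (meson PowD finite_subset)
      have tj: "trace n (v j * (\<Sum>m\<in>Y. a m)) = (if j \<in> Y then 1 else 0)" if "j \<in> J" for j
      proof -
        have "trace n (v j * (\<Sum>m\<in>Y. a m)) = (\<Sum>m\<in>Y. trace n (v j * a m))"
          by (simp add: sum_distrib_left trace_sum)
        also have "\<dots> = (\<Sum>m\<in>Y. if j = m then 1 else 0)" using a[OF that] by simp
        also have "\<dots> = (if j \<in> Y then 1 else 0)" using fY by simp
        finally show ?thesis .
      qed
      have "G (0 + (\<Sum>m\<in>Y. a m)) = (\<Sum>M\<in>S. \<Prod>j\<in>M. if j \<in> Y then 1 else 0)"
        unfolding G_def eval_rpoly_def
      proof (intro sum.cong prod.cong refl)
        fix M j assume "M \<in> S" "j \<in> M"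
        hence "j \<in> J" by (rule inJ)
        thus "trace n (v j * (0 + (\<Sum>m\<in>Y. a m))) = (if j \<in> Y then 1 else 0)" using tj by simp
      qed
      also have "\<dots> = (\<Sum>M\<in>S. if M \<subseteq> Y then 1 else 0)"
      proof (intro sum.cong refl)
        fix M assume "M \<in> S"
        hence "finite M" by (rule finM)
        thus "(\<Prod>j\<in>M. if j \<in> Y then (1::'a) else 0) = (if M \<subseteq> Y then 1 else 0)" by (rule prod_ind)
      qed
      also have "\<dots> = of_nat (card {M\<in>S. M \<subseteq> Y})" using of_nat_card_filter[OF fS] by simp
      finally show ?thesis .
    qed
    have DG: "Delta G M0 a 0 = 1"
    proof -
      have "Delta G M0 a 0 = (\<Sum>Y\<in>Pow M0. (of_nat (card {M\<in>S. M \<subseteq> Y}) :: 'a))"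
        unfolding Delta_def by (intro sum.cong refl GY)
      also have "\<dots> = 1" using mobius[OF fM0 fS] M0(1) by simp
      finally show ?thesis .
    qed
    have DA: "Delta A' M0 a 0 = 0" using dl_Delta[OF fM0 dlA'] M0(2) d3 by simp
    have D1: "Delta (g j0) M0 a 0 = 1" using DG DA by (simp add: gj0 Delta_add)
    have "card M0 \<le> bool_alg_degree n (g j0)"
      by (rule bad_lower[where a=a and x=0, OF bg fM0]) (simp add: D1)
    thus ?thesis using M0(2) by simp
  qed
  have "vec_alg_degree (4 * k) k H = Max ((\<lambda>j. bool_alg_degree n (g j)) ` {..<k})"
    by (simp add: vec_alg_degree_def c_def[symmetric] g_def[abs_def] Let_def)
  also have "\<dots> = d"
  proof (rule antisym)
    show "Max ((\<lambda>j. bool_alg_degree n (g j)) ` {..<k}) \<le> d"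
    proof -
      have "0 \<in> {..<k}" using k2 by simp
      hence "{..<k} \<noteq> {}" by blast
      thus ?thesis using upper by (subst Max_le_iff) auto
    qed
    show "d \<le> Max ((\<lambda>j. bool_alg_degree n (g j)) ` {..<k})"
      using lower j0(1) by (intro order.trans[OF lower] Max_ge) auto
  qed
  finally show ?thesis .
qed

end

theorem theorem7:
  fixes k \<tau> d :: nat and u :: "nat \<Rightarrow> 'a::{field,finite}" and S :: "nat set set"
    and \<omega> :: 'a and \<iota> :: "nat \<Rightarrow> nat" and H :: "'a \<Rightarrow> 'a"
  assumes card: "card (UNIV :: 'a set) = 2 ^ (4 * k)"
    and k2: "k \<ge> 2"
    and tau: "1 \<le> \<tau>" "\<tau> \<le> k"
    and u_nz: "\<forall>i\<in>{1..k}. u i \<in> subfield (2 * k) \<and> u i \<noteq> 0"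
    and u_rel: "\<forall>i j. 1 \<le> i \<and> i < j \<and> j \<le> k \<longrightarrow>
                   u i * u j ^ (2 ^ k) \<in> subfield k \<and> u i * u j ^ (2 ^ k) \<noteq> 0"
    and F: "S \<subseteq> Pow {1..\<tau>}" "rdeg S = d"
    and gen: "\<omega> \<in> unit_circle k" "unit_circle k \<subseteq> range (\<lambda>m::nat. \<omega> ^ m)"
    and idx: "inj_on \<iota> {1..\<tau>}" "\<iota> ` {1..\<tau>} \<subseteq> {1..k}"
    and H: "H = (\<lambda>x. trace4 k (\<omega> * x ^ (2 ^ k + 1))
                     + eval_rpoly S (\<lambda>j. trace (4 * k) (u (\<iota> j) * x)))"
  shows "vectorial_bent (4 * k) k H \<and>
         (lin_indep_F2 u {1..k} \<and> d \<ge> 2 \<longrightarrow> vec_alg_degree (4 * k) k H = d)"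
proof -
  interpret GF "TYPE('a)" k
    by unfold_locales (simp_all add: card k2)
  show ?thesis
    using vb_part[OF tau u_nz u_rel F(1) gen idx(2) H] deg_part[OF tau u_nz u_rel F gen idx H]
    by blast
qed

end
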